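(* For every $\boldsymbol\theta\in\boldsymbol\Theta$ and every $\alpha,\beta\in(0,1)$ with $\alpha+\beta<1/2$, $$\mathcal L_{\boldsymbol\theta}(\alpha,\beta)\;\ge\;\max\left\{\frac{\varphi(\alpha+\beta,\beta)}{I^0(\boldsymbol\theta)},\;\frac{\varphi(\alpha+\beta,\alpha)}{I^1(\boldsymbol\theta)}\right\},$$ where a term with denominator $+\infty$ is interpreted as $0$. Consequently, as $\alpha,\beta\to0$, $$\mathcal L_{\boldsymbol\theta}(\alpha,\beta)\;\ge\;(1+o(1))\max\left\{\frac{|\log\beta|}{I^0(\boldsymbol\theta)},\;\frac{|\log\alpha|}{I^1(\boldsymbol\theta)}\right\}.$$
   Context: Setting: $K\ge1$ mutually independent data streams $\{X_k(n),n\ge1\}$, $k\in[K]=\{1,\dots,K\}$. Within each stream the observations are i.i.d. with density $f_{\theta_k}$ with respect to a $\sigma$-finite measure $\nu$, where $\{f_\theta:\theta\in\Theta\}$ is a parametric family. $\Theta=\Theta^0\cup\Theta^1$ with $\Theta^0,\Theta^1$ nonempty and disjoint; stream $k$ is a noise if $\theta_k\in\Theta^0$ and a signal if $\theta_k\in\Theta^1$. For $\theta,\theta'\in\Theta$, $I(\theta,\theta')=\int f_\theta\log(f_\theta/f_{\theta'})\,d\nu$ is the Kullback–Leibler number. Standing separation assumption: $I(\theta^0,\Theta^1):=\inf_{\theta\in\Theta^1}I(\theta^0,\theta)>0$ for all $\theta^0\in\Theta^0$ and $I(\theta^1,\Theta^0):=\inf_{\theta\in\Theta^0}I(\theta^1,\theta)>0$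 for all $\theta^1\in\Theta^1$. The constrained joint parameter space is $\boldsymbol\Theta=\{\boldsymbol\theta=(\theta_1,\dots,\theta_K)\in\Theta^K:\exists\,\theta^0\in\Theta^0,\theta^1\in\Theta^1$ such that for all $k$, $\theta_k\in\Theta^0\Rightarrow\theta_k=\theta^0$ and $\theta_k\in\Theta^1\Rightarrow\theta_k=\theta^1\}$ (all noises share one parameter and all signals share one parameter). $\mathrm P_{\boldsymbol\theta},\mathrm E_{\boldsymbol\theta}$ denote probability/expectation when stream $k$ has density $f_{\theta_k}$. For $\boldsymbol\theta,\boldsymbol\theta'\in\boldsymbol\Theta$, $I(\boldsymbol\theta,\boldsymbol\theta')=\sum_{k}I(\theta_k,\theta'_k)$. $A(\boldsymbol\theta)=\{k\in[K]:\theta_k\in\Theta^1\}$ is the set of signals. Let $\mathcal F(n)=\sigma(X_k(t):1\le t\le n,k\in[K])$. A test is a pair $(T,D)$ with $T$ an $\{\mathcal F(n)\}$-stopping time and $D\subseteq[K]$ $\mathcal F(T)$-measurable. $\Delta(\alpha,\beta)$ is the set of tests such that for every $\boldsymbol\theta\in\boldsymbol\Theta$: $\mathrm P_{\boldsymbol\theta}(T<\infty)=1$, $\mathrm P_{\boldsymbol\theta}(D\setminus A(\boldsymbol\theta)\ne\emptyset)\le\alpha$ and $\mathrm P_{\boldsymbol\theta}(A(\boldsymbol\theta)\setminus D\ne\emptyset)\le\beta$. $\mathcal L_{\boldsymbol\theta}(\alpha,\beta)=\inf\{\mathrm E_{\boldsymbol\theta}[T]:(T,D)\in\Delta(\alpha,\beta)\}$.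 $I^0(\boldsymbol\theta)=\inf\{I(\boldsymbol\theta,\boldsymbol\theta'):\boldsymbol\theta'\in\boldsymbol\Theta,\ A(\boldsymbol\theta')\setminus A(\boldsymbol\theta)\neq\emptyset\}$, $I^1(\boldsymbol\theta)=\inf\{I(\boldsymbol\theta,\boldsymbol\theta'):\boldsymbol\theta'\in\boldsymbol\Theta,\ A(\boldsymbol\theta)\setminus A(\boldsymbol\theta')\neq\emptyset\}$, with $\inf\emptyset=+\infty$. $\varphi(x,y)=x\log\frac{x}{1-y}+(1-x)\log\frac{1-x}{y}$ for $x,y\in(0,1)$, $x+y<1$. *)

theory Defs
  imports "HOL-Probability.Probability"
begin

text \<open>Integrand of f log(f/g), split into positive and negative parts, with the usual
  conventions 0 log(0/g) = 0 and f log(f/0) = +infinity for f > 0.\<close>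

definition kl_pos :: "('a \<Rightarrow> real) \<Rightarrow> ('a \<Rightarrow> real) \<Rightarrow> 'a \<Rightarrow> ennreal" where
  "kl_pos f g x = (if f x = 0 then 0 else if g x = 0 then \<infinity>
                   else ennreal (f x * ln (f x / g x)))"

definition kl_neg :: "('a \<Rightarrow> real) \<Rightarrow> ('a \<Rightarrow> real) \<Rightarrow> 'a \<Rightarrow> ennreal" where
  "kl_neg f g x = (if f x = 0 \<or> g x = 0 then 0
                   else ennreal (- (f x * ln (f x / g x))))"

definition KL :: "'a measure \<Rightarrow> ('a \<Rightarrow> real) \<Rightarrow> ('a \<Rightarrow> real) \<Rightarrow> ereal" where
  "KL \<nu> f g = enn2ereal (\<integral>\<^sup>+ x. kl_pos f g x \<partial>\<nu>) - enn2ereal (\<integral>\<^sup>+ x. kl_neg f g x \<partial>\<nu>)"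

definition KL_set :: "'a measure \<Rightarrow> ('p \<Rightarrow> 'a \<Rightarrow> real) \<Rightarrow> 'p \<Rightarrow> 'p set \<Rightarrow> ereal" where
  "KL_set \<nu> f t S = (INF s\<in>S. KL \<nu> (f t) (f s))"

text \<open>Streams are indexed by [K] = {1..K}; a joint parameter is theta :: nat => 'p,
  of which only the values on {1..K} matter.\<close>

definition joint_params :: "nat \<Rightarrow> 'p set \<Rightarrow> 'p set \<Rightarrow> (nat \<Rightarrow> 'p) set" where
  "joint_params K \<Theta>0 \<Theta>1 =
     {\<theta>. (\<forall>k\<in>{1..K}. \<theta> k \<in> \<Theta>0 \<union> \<Theta>1) \<and>
          (\<exists>t0\<in>\<Theta>0. \<exists>t1\<in>\<Theta>1. \<forall>k\<in>{1..K}. (\<theta> k \<in> \<Theta>0 \<longrightarrow> \<theta> k = t0) \<and> (\<theta> k \<in> \<Theta>1 \<longrightarrow> \<theta> k = t1))}"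

definition signals :: "nat \<Rightarrow> 'p set \<Rightarrow> (nat \<Rightarrow> 'p) \<Rightarrow> nat set" where
  "signals K \<Theta>1 \<theta> = {k\<in>{1..K}. \<theta> k \<in> \<Theta>1}"

definition KL_joint :: "'a measure \<Rightarrow> ('p \<Rightarrow> 'a \<Rightarrow> real) \<Rightarrow> nat \<Rightarrow> (nat \<Rightarrow> 'p) \<Rightarrow> (nat \<Rightarrow> 'p) \<Rightarrow> ereal" where
  "KL_joint \<nu> f K \<theta> \<theta>' = (\<Sum>k\<in>{1..K}. KL \<nu> (f (\<theta> k)) (f (\<theta>' k)))"

definition I0 :: "'a measure \<Rightarrow> ('p \<Rightarrow> 'a \<Rightarrow> real) \<Rightarrow> nat \<Rightarrow> 'p set \<Rightarrow> 'p set \<Rightarrow> (nat \<Rightarrow> 'p) \<Rightarrow> ereal" where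
  "I0 \<nu> f K \<Theta>0 \<Theta>1 \<theta> = Inf {KL_joint \<nu> f K \<theta> \<theta>' | \<theta>'.
       \<theta>' \<in> joint_params K \<Theta>0 \<Theta>1 \<and> signals K \<Theta>1 \<theta>' - signals K \<Theta>1 \<theta> \<noteq> {}}"

definition I1 :: "'a measure \<Rightarrow> ('p \<Rightarrow> 'a \<Rightarrow> real) \<Rightarrow> nat \<Rightarrow> 'p set \<Rightarrow> 'p set \<Rightarrow> (nat \<Rightarrow> 'p) \<Rightarrow> ereal" where
  "I1 \<nu> f K \<Theta>0 \<Theta>1 \<theta> = Inf {KL_joint \<nu> f K \<theta> \<theta>' | \<theta>'.
       \<theta>' \<in> joint_params K \<Theta>0 \<Theta>1 \<and> signals K \<Theta>1 \<theta> - signals K \<Theta>1 \<theta>' \<noteq> {}}"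

text \<open>Observations X_k(n), k in [K], n >= 1, are the coordinates (k,n) of omega.
  obs_idx K N = [K] x {1..N}; all_idx K = [K] x {1,2,...}.\<close>
definition obs_idx :: "nat \<Rightarrow> nat \<Rightarrow> (nat \<times> nat) set" where
  "obs_idx K N = {1..K} \<times> {1..N}"

definition all_idx :: "nat \<Rightarrow> (nat \<times> nat) set" where
  "all_idx K = {1..K} \<times> {1..}"

definition Pth :: "'a measure \<Rightarrow> ('p \<Rightarrow> 'a \<Rightarrow> real) \<Rightarrow> nat \<Rightarrow> (nat \<Rightarrow> 'p) \<Rightarrow> ((nat \<times> nat) \<Rightarrow> 'a) measure" where
  "Pth \<nu> f K \<theta> = (\<Pi>\<^sub>M i\<in>all_idx K. density \<nu> (\<lambda>x. ennreal (f (\<theta> (fst i)) x)))"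

text \<open>The underlying measurable space (same space and sets as every P_theta).\<close>
definition Omega :: "'a measure \<Rightarrow> nat \<Rightarrow> ((nat \<times> nat) \<Rightarrow> 'a) measure" where
  "Omega \<nu> K = (\<Pi>\<^sub>M i\<in>all_idx K. \<nu>)"

text \<open>The filtration F(n) = sigma(X_k(t) : 1 <= t <= n, k in [K]), indexed by enat,
  with F(infinity) the full sigma-algebra.\<close>
definition filt :: "'a measure \<Rightarrow> nat \<Rightarrow> enat \<Rightarrow> ((nat \<times> nat) \<Rightarrow> 'a) measure" where
  "filt \<nu> K t = (case t of
      enat n \<Rightarrow> vimage_algebra (space (Omega \<nu> K)) (\<lambda>\<omega>. restrict \<omega> (obs_idx K n))
                   (\<Pi>\<^sub>M i\<in>obs_idx K n. \<nu>)
    | \<infinity> \<Rightarrow> Omega \<nu> K)"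

text \<open>A test (T, D): T an {F(n)}-stopping time (possibly infinite), D a subset of [K]
  that is F(T)-measurable.\<close>
definition is_test :: "'a measure \<Rightarrow> nat \<Rightarrow> (((nat \<times> nat) \<Rightarrow> 'a) \<Rightarrow> enat) \<Rightarrow> (((nat \<times> nat) \<Rightarrow> 'a) \<Rightarrow> nat set) \<Rightarrow> bool" where
  "is_test \<nu> K T D \<longleftrightarrow>
     stopping_time (filt \<nu> K) T \<and>
     (\<forall>\<omega>\<in>space (Omega \<nu> K). D \<omega> \<subseteq> {1..K}) \<and>
     (\<forall>S t. {\<omega>\<in>space (Omega \<nu> K). D \<omega> = S \<and> T \<omega> \<le> t} \<in> sets (filt \<nu> K t))"

definition Delta :: "'a measure \<Rightarrow> ('p \<Rightarrow> 'a \<Rightarrow> real) \<Rightarrow> nat \<Rightarrow> 'p set \<Rightarrow> 'p set \<Rightarrow> real \<Rightarrow> real \<Rightarrow>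
     ((((nat \<times> nat) \<Rightarrow> 'a) \<Rightarrow> enat) \<times> (((nat \<times> nat) \<Rightarrow> 'a) \<Rightarrow> nat set)) set" where
  "Delta \<nu> f K \<Theta>0 \<Theta>1 \<alpha> \<beta> = {(T, D). is_test \<nu> K T D \<and>
     (\<forall>\<theta>\<in>joint_params K \<Theta>0 \<Theta>1.
        prob_space.prob (Pth \<nu> f K \<theta>) {\<omega>\<in>space (Pth \<nu> f K \<theta>). T \<omega> < \<infinity>} = 1 \<and>
        prob_space.prob (Pth \<nu> f K \<theta>) {\<omega>\<in>space (Pth \<nu> f K \<theta>). D \<omega> - signals K \<Theta>1 \<theta> \<noteq> {}} \<le> \<alpha> \<and>
        prob_space.prob (Pth \<nu> f K \<theta>) {\<omega>\<in>space (Pth \<nu> f K \<theta>). signals K \<Theta>1 \<theta> - D \<omega> \<noteq> {}} \<le> \<beta>)}"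

definition Lopt :: "'a measure \<Rightarrow> ('p \<Rightarrow> 'a \<Rightarrow> real) \<Rightarrow> nat \<Rightarrow> 'p set \<Rightarrow> 'p set \<Rightarrow> (nat \<Rightarrow> 'p) \<Rightarrow> real \<Rightarrow> real \<Rightarrow> ennreal" where
  "Lopt \<nu> f K \<Theta>0 \<Theta>1 \<theta> \<alpha> \<beta> =
     (INF TD\<in>Delta \<nu> f K \<Theta>0 \<Theta>1 \<alpha> \<beta>. \<integral>\<^sup>+ \<omega>. ennreal_of_enat (fst TD \<omega>) \<partial>(Pth \<nu> f K \<theta>))"

definition phi :: "real \<Rightarrow> real \<Rightarrow> real" where
  "phi x y = x * ln (x / (1 - y)) + (1 - x) * ln ((1 - x) / y)"

definition div_inf :: "real \<Rightarrow> ereal \<Rightarrow> real" where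
  "div_inf c I = (if I = \<infinity> then 0 else c / real_of_ereal I)"

end

theory Submission
  imports Defs
begin


locale dfam =
  fixes \<nu> :: "'a measure" and K :: nat and g :: "nat \<Rightarrow> 'a \<Rightarrow> real"
  assumes sf: "sigma_finite_measure \<nu>"
    and K1: "1 \<le> K"
    and g_meas: "\<And>k. k \<in> {1..K} \<Longrightarrow> g k \<in> borel_measurable \<nu>"
    and g_nn: "\<And>k x. k \<in> {1..K} \<Longrightarrow> x \<in> space \<nu> \<Longrightarrow> 0 \<le> g k x"
    and g_int: "\<And>k. k \<in> {1..K} \<Longrightarrow> (\<integral>\<^sup>+ x. ennreal (g k x) \<partial>\<nu>) = 1"
begin

definition gh :: "nat \<Rightarrow> 'a \<Rightarrow> real" where
  "gh k = (if k \<in> {1..K} then g k else g 1)"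

definition Mh :: "nat \<times> nat \<Rightarrow> 'a measure" where
  "Mh i = density \<nu> (\<lambda>x. ennreal (gh (fst i) x))"

lemma gh_props: "gh k \<in> borel_measurable \<nu>" "x \<in> space \<nu> \<Longrightarrow> 0 \<le> gh k x"
   "(\<integral>\<^sup>+ x. ennreal (gh k x) \<partial>\<nu>) = 1"
  using g_meas g_nn g_int K1 by (auto simp: gh_def)

lemma prob_Mh: "prob_space (Mh i)"
proof -
  have "emeasure (Mh i) (space (Mh i)) = (\<integral>\<^sup>+ x. ennreal (gh (fst i) x) * indicator (space \<nu>) x \<partial>\<nu>)"
    unfolding Mh_def by (simp add: emeasure_density gh_props)
  also have "\<dots> = 1"
    by (subst nn_integral_cong[where v="\<lambda>x. ennreal (gh (fst i) x)"]) (auto simp: gh_props)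
  finally show ?thesis by (rule prob_spaceI)
qed

lemma sets_Mh[simp, measurable_cong]: "sets (Mh i) = sets \<nu>"
  by (simp add: Mh_def)

lemma space_Mh[simp]: "space (Mh i) = space \<nu>"
  by (simp add: Mh_def)

sublocale pps: product_prob_space Mh "all_idx K"
proof -
  have "product_sigma_finite Mh"
    unfolding product_sigma_finite_def using prob_Mh prob_space_imp_sigma_finite by blast
  then show "product_prob_space Mh"
    by (simp add: product_prob_space_def product_prob_space_axioms_def prob_Mh)
qed

lemma PP_eq: "(\<Pi>\<^sub>M i\<in>all_idx K. density \<nu> (\<lambda>x. ennreal (g (fst i) x))) = PiM (all_idx K) Mh"
  by (rule PiM_cong) (auto simp: Mh_def gh_def all_idx_def)

lemma PiM_J_eq: "J \<subseteq> all_idx K \<Longrightarrow> (\<Pi>\<^sub>M i\<in>J. density \<nu> (\<lambda>x. ennreal (g (fst i) x))) = PiM J Mh"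
  by (rule PiM_cong) (auto simp: Mh_def gh_def all_idx_def)

lemma marginal:
  assumes "finite J" "J \<subseteq> all_idx K" and h: "h \<in> borel_measurable (PiM J Mh)"
  shows "(\<integral>\<^sup>+ \<omega>. h (restrict \<omega> J) \<partial>PiM (all_idx K) Mh) = (\<integral>\<^sup>+ x. h x \<partial>PiM J Mh)"
proof -
  have "(\<integral>\<^sup>+ x. h x \<partial>PiM J Mh) = (\<integral>\<^sup>+ x. h x \<partial>distr (PiM (all_idx K) Mh) (PiM J Mh) (\<lambda>x. restrict x J))"
    using pps.distr_PiM_restrict_finite[OF assms(1,2)] by simp
  also have "\<dots> = (\<integral>\<^sup>+ \<omega>. h (restrict \<omega> J) \<partial>PiM (all_idx K) Mh)"
    by (rule nn_integral_distr) (auto intro: measurable_restrict_subset[OF assms(2)] h)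
  finally show ?thesis by simp
qed

lemma PiM_density:
  assumes J: "finite J"
  shows "PiM J Mh = density (PiM J (\<lambda>_. \<nu>)) (\<lambda>x. \<Prod>i\<in>J. ennreal (gh (fst i) (x i)))"
proof -
  interpret nu: product_sigma_finite "\<lambda>_. \<nu>"
    unfolding product_sigma_finite_def using sf by blast
  have meas: "(\<lambda>x. \<Prod>i\<in>J. ennreal (gh (fst i) (x i))) \<in> borel_measurable (PiM J (\<lambda>_. \<nu>))"
    using gh_props(1) by measurable
  show ?thesis
  proof (rule pps.PiM_eqI[symmetric, OF J])
    show "sets (density (PiM J (\<lambda>_. \<nu>)) (\<lambda>x. \<Prod>i\<in>J. ennreal (gh (fst i) (x i)))) = sets (PiM J Mh)"
      by (simp cong: sets_PiM_cong)
  next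
    fix A assume A: "\<And>i. i \<in> J \<Longrightarrow> A i \<in> sets (Mh i)"
    have AP: "Pi\<^sub>E J A \<in> sets (PiM J (\<lambda>_. \<nu>))"
      using A by (intro sets_PiM_I_finite J) auto
    have "emeasure (density (PiM J (\<lambda>_. \<nu>)) (\<lambda>x. \<Prod>i\<in>J. ennreal (gh (fst i) (x i)))) (Pi\<^sub>E J A)
       = (\<integral>\<^sup>+ x. (\<Prod>i\<in>J. ennreal (gh (fst i) (x i))) * indicator (Pi\<^sub>E J A) x \<partial>PiM J (\<lambda>_. \<nu>))"
      by (rule emeasure_density[OF meas AP])
    also have "\<dots> = (\<integral>\<^sup>+ x. (\<Prod>i\<in>J. ennreal (gh (fst i) (x i)) * indicator (A i) (x i)) \<partial>PiM J (\<lambda>_. \<nu>))"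
      by (rule nn_integral_cong) (auto simp: prod.distrib indicator_def space_PiM PiE_iff J)
    also have "\<dots> = (\<Prod>i\<in>J. (\<integral>\<^sup>+ y. ennreal (gh (fst i) y) * indicator (A i) y \<partial>\<nu>))"
      using A gh_props(1) by (intro nu.product_nn_integral_prod J) auto
    also have "\<dots> = (\<Prod>i\<in>J. emeasure (Mh i) (A i))"
      using A gh_props(1) by (intro prod.cong refl) (simp add: Mh_def emeasure_density)
    finally show "emeasure (density (PiM J (\<lambda>_. \<nu>)) (\<lambda>x. \<Prod>i\<in>J. ennreal (gh (fst i) (x i)))) (Pi\<^sub>E J A) = (\<Prod>i\<in>J. emeasure (Mh i) (A i))" .
  qed
qed

end


lemma obs_sub: "obs_idx K n \<subseteq> all_idx K"
  by (auto simp: obs_idx_def all_idx_def)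

lemma finite_obs[simp]: "finite (obs_idx K n)"
  by (simp add: obs_idx_def)

lemma space_filt[simp]: "space (filt \<nu> K t) = space (Omega \<nu> K)"
  by (cases t) (simp_all add: filt_def)

lemma restrict_in_space:
  "\<omega> \<in> space (Omega \<nu> K) \<Longrightarrow> restrict \<omega> (obs_idx K n) \<in> space (\<Pi>\<^sub>M i\<in>obs_idx K n. \<nu>)"
  using obs_sub[of K n] by (auto simp: Omega_def space_PiM PiE_iff)

lemma sets_filt_enat:
  "sets (filt \<nu> K (enat n)) = {(\<lambda>\<omega>. restrict \<omega> (obs_idx K n)) -` B \<inter> space (Omega \<nu> K) | B. B \<in> sets (\<Pi>\<^sub>M i\<in>obs_idx K n. \<nu>)}"
  unfolding filt_def by (simp add: sets_vimage_algebra2 restrict_in_space)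

lemma sets_filt_sub: "sets (filt \<nu> K t) \<subseteq> sets (Omega \<nu> K)"
proof (cases t)
  case (enat n)
  have "(\<lambda>\<omega>. restrict \<omega> (obs_idx K n)) \<in> measurable (Omega \<nu> K) (\<Pi>\<^sub>M i\<in>obs_idx K n. \<nu>)"
    unfolding Omega_def by (rule measurable_restrict_subset[OF obs_sub])
  then show ?thesis using enat by (auto simp: sets_filt_enat)
qed (simp add: filt_def)

lemma sets_filt_mono:
  assumes "m \<le> n"
  shows "sets (filt \<nu> K (enat m)) \<subseteq> sets (filt \<nu> K (enat n))"
proof
  fix X assume "X \<in> sets (filt \<nu> K (enat m))"
  then obtain B where B: "B \<in> sets (\<Pi>\<^sub>M i\<in>obs_idx K m. \<nu>)"
    and X: "X = (\<lambda>\<omega>. restrict \<omega> (obs_idx K m)) -` B \<inter> space (Omega \<nu> K)"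
    by (auto simp: sets_filt_enat)
  have sub: "obs_idx K m \<subseteq> obs_idx K n" using assms by (auto simp: obs_idx_def)
  define B2 where "B2 = (\<lambda>x. restrict x (obs_idx K m)) -` B \<inter> space (\<Pi>\<^sub>M i\<in>obs_idx K n. \<nu>)"
  have "B2 \<in> sets (\<Pi>\<^sub>M i\<in>obs_idx K n. \<nu>)"
    unfolding B2_def using measurable_restrict_subset[OF sub] B by (rule measurable_sets)
  moreover have "X = (\<lambda>\<omega>. restrict \<omega> (obs_idx K n)) -` B2 \<inter> space (Omega \<nu> K)"
    using sub restrict_in_space[of _ \<nu> K n] unfolding X B2_def
    by (auto simp: restrict_restrict Int_absorb1)
  ultimately show "X \<in> sets (filt \<nu> K (enat n))"
    by (auto simp: sets_filt_enat)
qed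

lemma test_stop:
  assumes "is_test \<nu> K T D"
  shows "{\<omega>\<in>space (Omega \<nu> K). T \<omega> \<le> t} \<in> sets (filt \<nu> K t)"
  using assms unfolding is_test_def stopping_time_def pred_def by auto

lemma test_D_T:
  assumes "is_test \<nu> K T D"
  shows "{\<omega>\<in>space (Omega \<nu> K). Pr (D \<omega>) \<and> T \<omega> = enat n} \<in> sets (filt \<nu> K (enat n))"
proof -
  have DS: "\<And>S m. {\<omega>\<in>space (Omega \<nu> K). D \<omega> = S \<and> T \<omega> \<le> enat m} \<in> sets (filt \<nu> K (enat m))"
    using assms unfolding is_test_def by auto
  define Z where "Z S = {\<omega>\<in>space (Omega \<nu> K). D \<omega> = S \<and> T \<omega> \<le> enat n} -
      (if n = 0 then {} else {\<omega>\<in>space (Omega \<nu> K). D \<omega> = S \<and> T \<omega> \<le> enat (n - 1)})" for S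
  have Z: "Z S \<in> sets (filt \<nu> K (enat n))" for S
  proof (cases "n = 0")
    case False
    then have "{\<omega>\<in>space (Omega \<nu> K). D \<omega> = S \<and> T \<omega> \<le> enat (n - 1)} \<in> sets (filt \<nu> K (enat n))"
      using DS sets_filt_mono[of "n - 1" n \<nu> K] by auto
    then show ?thesis using DS False unfolding Z_def by auto
  qed (use DS in \<open>simp add: Z_def\<close>)
  have "{\<omega>\<in>space (Omega \<nu> K). Pr (D \<omega>) \<and> T \<omega> = enat n} = (\<Union>S\<in>{S. S \<subseteq> {1..K} \<and> Pr S}. Z S)"
  proof -
    have Dsub: "\<And>\<omega>. \<omega> \<in> space (Omega \<nu> K) \<Longrightarrow> D \<omega> \<subseteq> {1..K}"
      using assms unfolding is_test_def by auto
    have e: "(T \<omega> = enat n) \<longleftrightarrow> (T \<omega> \<le> enat n \<and> \<not> (n \<noteq> 0 \<and> T \<omega> \<le> enat (n - 1)))" for \<omega>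
      by (cases "T \<omega>") auto
    show ?thesis using Dsub unfolding Z_def e by auto
  qed
  also have "\<dots> \<in> sets (filt \<nu> K (enat n))"
    using Z by (intro sets.finite_UN) auto
  finally show ?thesis .
qed

lemma test_D_meas:
  assumes "is_test \<nu> K T D"
  shows "{\<omega>\<in>space (Omega \<nu> K). Pr (D \<omega>)} \<in> sets (Omega \<nu> K)"
proof -
  have DS: "\<And>S. {\<omega>\<in>space (Omega \<nu> K). D \<omega> = S \<and> T \<omega> \<le> \<infinity>} \<in> sets (filt \<nu> K \<infinity>)"
    using assms unfolding is_test_def by blast
  have Dsub: "\<And>\<omega>. \<omega> \<in> space (Omega \<nu> K) \<Longrightarrow> D \<omega> \<subseteq> {1..K}"
    using assms unfolding is_test_def by auto
  have "{\<omega>\<in>space (Omega \<nu> K). Pr (D \<omega>)} = (\<Union>S\<in>{S. S \<subseteq> {1..K} \<and> Pr S}. {\<omega>\<in>space (Omega \<nu> K). D \<omega> = S \<and> T \<omega> \<le> \<infinity>})"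
    using Dsub by auto
  also have "\<dots> \<in> sets (Omega \<nu> K)"
    using DS by (intro sets.finite_UN) (auto simp: filt_def)
  finally show ?thesis .
qed



locale twofam = P: dfam \<nu> K p + Q: dfam \<nu> K q for \<nu> K p q +
  assumes klfin: "\<And>k. k \<in> {1..K} \<Longrightarrow> (\<integral>\<^sup>+x. kl_pos (p k) (q k) x \<partial>\<nu>) < \<infinity>"
begin

abbreviation "PP \<equiv> PiM (all_idx K) P.Mh"
abbreviation "QQ \<equiv> PiM (all_idx K) Q.Mh"

lemma space_PP: "space PP = space (Omega \<nu> K)"
  by (simp add: Omega_def space_PiM)
lemma space_QQ: "space QQ = space (Omega \<nu> K)"
  by (simp add: Omega_def space_PiM)
lemma sets_PP: "sets PP = sets (Omega \<nu> K)"
  unfolding Omega_def by (rule sets_PiM_cong) auto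
lemma sets_QQ: "sets QQ = sets (Omega \<nu> K)"
  unfolding Omega_def by (rule sets_PiM_cong) auto

lemma null_pq:
  assumes k: "k \<in> {1..K}"
  shows "AE x in \<nu>. 0 < p k x \<longrightarrow> 0 < q k x"
proof -
  define S where "S = {x\<in>space \<nu>. 0 < p k x \<and> q k x \<le> 0}"
  have [measurable]: "p k \<in> borel_measurable \<nu>" "q k \<in> borel_measurable \<nu>"
    using k P.g_meas Q.g_meas by auto
  have Sm: "S \<in> sets \<nu>" unfolding S_def by measurable
  have "\<infinity> * emeasure \<nu> S = (\<integral>\<^sup>+x. \<infinity> * indicator S x \<partial>\<nu>)"
    using Sm by (simp add: nn_integral_cmult_indicator)
  also have "\<dots> \<le> (\<integral>\<^sup>+x. kl_pos (p k) (q k) x \<partial>\<nu>)"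
  proof (rule nn_integral_mono)
    fix x assume x: "x \<in> space \<nu>"
    show "\<infinity> * indicator S x \<le> kl_pos (p k) (q k) x"
    proof (cases "x \<in> S")
      case True
      then have "q k x = 0" using Q.g_nn[OF k x] by (auto simp: S_def)
      then show ?thesis using True by (auto simp: S_def kl_pos_def)
    qed simp
  qed
  finally have "emeasure \<nu> S = 0"
    using klfin[OF k] by (metis ennreal_mult_eq_top_iff infinity_ennreal_def not_less top.extremum)
  then have "S \<in> null_sets \<nu>" using Sm by auto
  then show ?thesis
    by (rule AE_I') (auto simp: S_def)
qed

lemma AE_good:
  "AE \<omega> in PP. \<forall>i\<in>all_idx K. 0 < p (fst i) (\<omega> i) \<and> 0 < q (fst i) (\<omega> i)"
proof (rule AE_ball_countable')
  fix i assume i: "i \<in> all_idx K"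
  then have k: "fst i \<in> {1..K}" by (auto simp: all_idx_def)
  have "AE x in P.Mh i. 0 < p (fst i) x \<and> 0 < q (fst i) x"
  proof -
    have gh: "P.gh (fst i) = p (fst i)" using k by (simp add: P.gh_def)
    have "AE x in \<nu>. 0 < ennreal (P.gh (fst i) x) \<longrightarrow> 0 < p (fst i) x \<and> 0 < q (fst i) x"
      using null_pq[OF k] unfolding gh by (rule AE_mp) (auto intro!: AE_I2)
    then show ?thesis
      unfolding P.Mh_def using P.gh_props(1)[of "fst i"] by (subst AE_density) auto
  qed
  then show "AE \<omega> in PP. 0 < p (fst i) (\<omega> i) \<and> 0 < q (fst i) (\<omega> i)"
    by (rule P.pps.AE_component[OF i])
qed (rule countable_subset[OF subset_UNIV], simp)

end


context dfam begin

lemma space_Om: "space (Omega \<nu> K) = space (PiM (all_idx K) Mh)"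
  by (simp add: Omega_def space_PiM)

lemma emb_eq: "(\<lambda>\<omega>. restrict \<omega> J) -` B \<inter> space (Omega \<nu> K) = prod_emb (all_idx K) Mh J B"
  by (simp add: prod_emb_def Omega_def space_PiM)

lemma emeasure_emb:
  assumes "B \<in> sets (PiM (obs_idx K t) (\<lambda>_. \<nu>))"
  shows "emeasure (PiM (all_idx K) Mh) ((\<lambda>\<omega>. restrict \<omega> (obs_idx K t)) -` B \<inter> space (Omega \<nu> K))
     = emeasure (PiM (obs_idx K t) Mh) B"
proof -
  have "B \<in> sets (PiM (obs_idx K t) Mh)" using assms by (simp cong: sets_PiM_cong)
  then show ?thesis unfolding emb_eq
    by (intro pps.emeasure_PiM_emb' obs_sub finite_obs)
qed

lemma indep:
  assumes B: "B \<in> sets (PiM (obs_idx K t) (\<lambda>_. \<nu>))" and k: "k \<in> {1..K}"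
    and z[measurable]: "z \<in> borel_measurable \<nu>"
  shows "(\<integral>\<^sup>+\<omega>. indicator ((\<lambda>\<omega>. restrict \<omega> (obs_idx K t)) -` B \<inter> space (Omega \<nu> K)) \<omega> * z (\<omega> (k, Suc t)) \<partial>PiM (all_idx K) Mh)
     = emeasure (PiM (all_idx K) Mh) ((\<lambda>\<omega>. restrict \<omega> (obs_idx K t)) -` B \<inter> space (Omega \<nu> K)) * (\<integral>\<^sup>+x. z x \<partial>Mh (k, Suc t))"
proof -
  define i where "i = (k, Suc t)"
  define Jt where "Jt = obs_idx K t"
  define J where "J = insert i Jt"
  have iJt: "i \<notin> Jt" by (auto simp: i_def Jt_def obs_idx_def)
  have JI: "J \<subseteq> all_idx K" using k by (auto simp: J_def i_def Jt_def obs_idx_def all_idx_def)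
  have fJ: "finite J" "finite Jt" by (auto simp: J_def Jt_def)
  have BJ: "B \<in> sets (PiM Jt Mh)" using B by (simp add: Jt_def cong: sets_PiM_cong)
  define h where "h x = indicator B (restrict x Jt) * z (x i)" for x :: "nat \<times> nat \<Rightarrow> 'a"
  have rm: "(\<lambda>x. restrict x Jt) \<in> measurable (PiM J Mh) (PiM Jt Mh)"
    by (rule measurable_restrict_subset) (auto simp: J_def)
  have hm: "h \<in> borel_measurable (PiM J Mh)"
  proof -
    have "(\<lambda>x. indicator B (restrict x Jt) :: ennreal) \<in> borel_measurable (PiM J Mh)"
      using measurable_comp[OF rm borel_measurable_indicator[OF BJ]] by (simp add: comp_def)
    moreover have "(\<lambda>x. z (x i)) \<in> borel_measurable (PiM J Mh)"
    proof -
      have zi: "z \<in> borel_measurable (Mh i)"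
        using z by (simp add: measurable_cong_sets[OF sets_Mh refl])
      have iJ: "i \<in> J" by (simp add: J_def)
      show ?thesis
        using measurable_comp[OF measurable_component_singleton[OF iJ, of Mh] zi] by (simp add: comp_def)
    qed
    ultimately show ?thesis unfolding h_def by measurable
  qed
  have "(\<integral>\<^sup>+\<omega>. indicator ((\<lambda>\<omega>. restrict \<omega> (obs_idx K t)) -` B \<inter> space (Omega \<nu> K)) \<omega> * z (\<omega> (k, Suc t)) \<partial>PiM (all_idx K) Mh)
      = (\<integral>\<^sup>+\<omega>. h (restrict \<omega> J) \<partial>PiM (all_idx K) Mh)"
  proof -
    have e: "J \<inter> Jt = Jt" by (auto simp: J_def)
    have e2: "restrict (restrict x J) Jt = restrict x (obs_idx K t)" for x :: "nat \<times> nat \<Rightarrow> 'a"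
      by (auto simp: restrict_def fun_eq_iff J_def Jt_def)
    have e3: "restrict x J i = x (k, Suc t)" for x :: "nat \<times> nat \<Rightarrow> 'a"
      by (simp add: J_def i_def)
    show ?thesis by (rule nn_integral_cong) (simp only: h_def e2 e3, simp add: indicator_def space_Om)
  qed
  also have "\<dots> = (\<integral>\<^sup>+x. h x \<partial>PiM J Mh)"
    by (rule marginal[OF fJ(1) JI hm])
  also have "\<dots> = (\<integral>\<^sup>+x. (\<integral>\<^sup>+y. h (x(i := y)) \<partial>Mh i) \<partial>PiM Jt Mh)"
    unfolding J_def by (rule pps.product_nn_integral_insert[OF fJ(2) iJt hm[unfolded J_def]])
  also have "\<dots> = (\<integral>\<^sup>+x. indicator B x * (\<integral>\<^sup>+y. z y \<partial>Mh i) \<partial>PiM Jt Mh)"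
  proof (rule nn_integral_cong)
    fix x assume x: "x \<in> space (PiM Jt Mh)"
    then have "restrict (x(i := y)) Jt = x" for y
      using iJt by (auto simp: space_PiM PiE_def extensional_def restrict_def fun_eq_iff)
    then show "(\<integral>\<^sup>+y. h (x(i := y)) \<partial>Mh i) = indicator B x * (\<integral>\<^sup>+y. z y \<partial>Mh i)"
      unfolding h_def by (simp add: nn_integral_cmult)
  qed
  also have "\<dots> = emeasure (PiM Jt Mh) B * (\<integral>\<^sup>+y. z y \<partial>Mh i)"
    using BJ by (simp add: nn_integral_multc)
  also have "emeasure (PiM Jt Mh) B = emeasure (PiM (all_idx K) Mh) ((\<lambda>\<omega>. restrict \<omega> (obs_idx K t)) -` B \<inter> space (Omega \<nu> K))"
    using emeasure_emb[OF B] by (simp add: Jt_def)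
  finally show ?thesis unfolding i_def .
qed

end


context twofam begin

definition rr :: "nat \<Rightarrow> 'a \<Rightarrow> real" where
  "rr k x = (if 0 < p k x \<and> 0 < q k x then q k x / p k x else 0)"

lemma obs_fst: "i \<in> obs_idx K n \<Longrightarrow> fst i \<in> {1..K}"
  by (auto simp: obs_idx_def)

lemma meas_p[measurable]: "k \<in> {1..K} \<Longrightarrow> p k \<in> borel_measurable \<nu>"
  using P.g_meas by auto
lemma meas_q[measurable]: "k \<in> {1..K} \<Longrightarrow> q k \<in> borel_measurable \<nu>"
  using Q.g_meas by auto

lemma meas_rr[measurable]: "k \<in> {1..K} \<Longrightarrow> rr k \<in> borel_measurable \<nu>"
  unfolding rr_def by measurable

lemma meas_prod:
  assumes "\<And>k. k \<in> {1..K} \<Longrightarrow> f k \<in> borel_measurable \<nu>"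
  shows "(\<lambda>x. \<Prod>i\<in>obs_idx K n. ennreal (f (fst i) (x i))) \<in> borel_measurable (PiM (obs_idx K n) (\<lambda>_. \<nu>))"
proof (rule borel_measurable_prod_ennreal)
  fix i assume i: "i \<in> obs_idx K n"
  have "(\<lambda>x. f (fst i) (x i)) \<in> borel_measurable (PiM (obs_idx K n) (\<lambda>_. \<nu>))"
    using measurable_comp[OF measurable_component_singleton[OF i, of "\<lambda>_. \<nu>"] assms[OF obs_fst[OF i]]]
    by (simp add: comp_def)
  then show "(\<lambda>x. ennreal (f (fst i) (x i))) \<in> borel_measurable (PiM (obs_idx K n) (\<lambda>_. \<nu>))"
    by measurable
qed

lemma change:
  assumes B: "B \<in> sets (PiM (obs_idx K n) (\<lambda>_. \<nu>))"
  shows "(\<integral>\<^sup>+\<omega>. indicator ((\<lambda>\<omega>. restrict \<omega> (obs_idx K n)) -` B \<inter> space (Omega \<nu> K)) \<omega>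
            * ennreal (\<Prod>i\<in>obs_idx K n. rr (fst i) (\<omega> i)) \<partial>PP)
         \<le> emeasure QQ ((\<lambda>\<omega>. restrict \<omega> (obs_idx K n)) -` B \<inter> space (Omega \<nu> K))"
proof -
  define J where "J = obs_idx K n"
  define h where "h x = indicator B x * (\<Prod>i\<in>J. ennreal (rr (fst i) (x i)))" for x :: "nat \<times> nat \<Rightarrow> 'a"
  have hmn: "h \<in> borel_measurable (PiM J (\<lambda>_. \<nu>))"
    unfolding h_def J_def using meas_prod[of rr n] meas_rr B by measurable
  have setsJ: "sets (PiM J P.Mh) = sets (PiM J (\<lambda>_. \<nu>))" by (simp cong: sets_PiM_cong)
  have hm: "h \<in> borel_measurable (PiM J P.Mh)"
    using hmn by (simp add: measurable_cong_sets[OF setsJ refl])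
  have rrnn: "\<And>k x. 0 \<le> rr k x" by (simp add: rr_def)
  have "(\<integral>\<^sup>+\<omega>. indicator ((\<lambda>\<omega>. restrict \<omega> (obs_idx K n)) -` B \<inter> space (Omega \<nu> K)) \<omega>
            * ennreal (\<Prod>i\<in>obs_idx K n. rr (fst i) (\<omega> i)) \<partial>PP) = (\<integral>\<^sup>+\<omega>. h (restrict \<omega> J) \<partial>PP)"
  proof (rule nn_integral_cong)
    fix \<omega> assume \<omega>: "\<omega> \<in> space PP"
    have "(\<Prod>i\<in>J. ennreal (rr (fst i) (restrict \<omega> J i))) = ennreal (\<Prod>i\<in>obs_idx K n. rr (fst i) (\<omega> i))"
      by (simp add: prod_ennreal rrnn J_def prod_nonneg)
    then show "indicator ((\<lambda>\<omega>. restrict \<omega> (obs_idx K n)) -` B \<inter> space (Omega \<nu> K)) \<omega>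
            * ennreal (\<Prod>i\<in>obs_idx K n. rr (fst i) (\<omega> i)) = h (restrict \<omega> J)"
      using \<omega> by (simp add: h_def J_def space_PP indicator_def)
  qed
  also have "\<dots> = (\<integral>\<^sup>+x. h x \<partial>PiM J P.Mh)"
    by (rule P.marginal) (use hm in \<open>auto simp: J_def obs_sub\<close>)
  also have "\<dots> = (\<integral>\<^sup>+x. h x \<partial>density (PiM J (\<lambda>_. \<nu>)) (\<lambda>x. \<Prod>i\<in>J. ennreal (P.gh (fst i) (x i))))"
    by (simp add: P.PiM_density J_def)
  also have "\<dots> = (\<integral>\<^sup>+x. (\<Prod>i\<in>J. ennreal (P.gh (fst i) (x i))) * h x \<partial>PiM J (\<lambda>_. \<nu>))"
    by (rule nn_integral_density) (use hmn meas_prod[of P.gh n] P.gh_props(1) in \<open>auto simp: J_def obs_idx_def\<close>)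
  also have "\<dots> \<le> (\<integral>\<^sup>+x. (\<Prod>i\<in>J. ennreal (Q.gh (fst i) (x i))) * indicator B x \<partial>PiM J (\<lambda>_. \<nu>))"
  proof (rule nn_integral_mono)
    fix x assume x: "x \<in> space (PiM J (\<lambda>_. \<nu>))"
    have xi: "\<And>i. i \<in> J \<Longrightarrow> x i \<in> space \<nu>" using x by (auto simp: space_PiM)
    have kK: "\<And>i. i \<in> J \<Longrightarrow> fst i \<in> {1..K}" unfolding J_def by (rule obs_fst)
    have pn: "\<And>i. i \<in> J \<Longrightarrow> 0 \<le> p (fst i) (x i)" using P.g_nn kK xi by auto
    have qn: "\<And>i. i \<in> J \<Longrightarrow> 0 \<le> q (fst i) (x i)" using Q.g_nn kK xi by auto
    have "(\<Prod>i\<in>J. ennreal (P.gh (fst i) (x i))) * (\<Prod>i\<in>J. ennreal (rr (fst i) (x i)))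
        = (\<Prod>i\<in>J. ennreal (p (fst i) (x i) * rr (fst i) (x i)))"
      unfolding prod.distrib[symmetric]
    proof (rule prod.cong[OF refl])
      fix i assume i: "i \<in> J"
      show "ennreal (P.gh (fst i) (x i)) * ennreal (rr (fst i) (x i)) = ennreal (p (fst i) (x i) * rr (fst i) (x i))"
        using kK[OF i] pn[OF i] rrnn by (simp add: P.gh_def ennreal_mult)
    qed
    also have "\<dots> \<le> (\<Prod>i\<in>J. ennreal (q (fst i) (x i)))"
    proof -
      have "(\<Prod>i\<in>J. p (fst i) (x i) * rr (fst i) (x i)) \<le> (\<Prod>i\<in>J. q (fst i) (x i))"
      proof (rule prod_mono)
        fix i assume i: "i \<in> J"
        show "0 \<le> p (fst i) (x i) * rr (fst i) (x i) \<and> p (fst i) (x i) * rr (fst i) (x i) \<le> q (fst i) (x i)"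
          using pn[OF i] qn[OF i] rrnn by (auto simp: rr_def)
      qed
      then show ?thesis
        using pn qn rrnn by (simp add: prod_ennreal ennreal_leI prod_nonneg)
    qed
    also have "\<dots> = (\<Prod>i\<in>J. ennreal (Q.gh (fst i) (x i)))"
      by (rule prod.cong[OF refl]) (use kK in \<open>simp add: Q.gh_def\<close>)
    finally have le: "(\<Prod>i\<in>J. ennreal (P.gh (fst i) (x i))) * (\<Prod>i\<in>J. ennreal (rr (fst i) (x i))) \<le> (\<Prod>i\<in>J. ennreal (Q.gh (fst i) (x i)))" .
    show "(\<Prod>i\<in>J. ennreal (P.gh (fst i) (x i))) * h x \<le> (\<Prod>i\<in>J. ennreal (Q.gh (fst i) (x i))) * indicator B x"
      using le by (auto simp: h_def indicator_def)
  qed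
  also have "\<dots> = emeasure (density (PiM J (\<lambda>_. \<nu>)) (\<lambda>x. \<Prod>i\<in>J. ennreal (Q.gh (fst i) (x i)))) B"
    by (rule emeasure_density[symmetric]) (use meas_prod[of Q.gh n] Q.gh_props(1) B in \<open>auto simp: J_def obs_idx_def\<close>)
  also have "\<dots> = emeasure (PiM J Q.Mh) B"
    by (simp add: Q.PiM_density J_def)
  also have "\<dots> = emeasure QQ ((\<lambda>\<omega>. restrict \<omega> (obs_idx K n)) -` B \<inter> space (Omega \<nu> K))"
    using Q.emeasure_emb[OF B] by (simp add: J_def)
  finally show ?thesis .
qed

end


locale testfam = twofam \<nu> K p q for \<nu> K p q +
  fixes T :: "((nat \<times> nat) \<Rightarrow> 'a) \<Rightarrow> enat" and D :: "((nat \<times> nat) \<Rightarrow> 'a) \<Rightarrow> nat set"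
  assumes test: "is_test \<nu> K T D"
    and Tfin: "AE \<omega> in PiM (all_idx K) (dfam.Mh \<nu> K p). T \<omega> \<noteq> \<infinity>"
begin

lemma comp_meas:
  assumes i: "i \<in> all_idx K" and f: "f \<in> borel_measurable \<nu>"
  shows "(\<lambda>\<omega>. f (\<omega> i)) \<in> borel_measurable PP"
proof -
  have fi: "f \<in> borel_measurable (P.Mh i)"
    using f by (simp add: measurable_cong_sets[OF P.sets_Mh refl])
  show ?thesis
    using measurable_comp[OF measurable_component_singleton[OF i, of P.Mh] fi] by (simp add: comp_def)
qed

lemma gt_set:
  obtains B where "B \<in> sets (PiM (obs_idx K t) (\<lambda>_. \<nu>))"
    "{\<omega>\<in>space PP. enat t < T \<omega>} = (\<lambda>\<omega>. restrict \<omega> (obs_idx K t)) -` B \<inter> space (Omega \<nu> K)"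
proof -
  have "{\<omega>\<in>space (Omega \<nu> K). T \<omega> \<le> enat t} \<in> sets (filt \<nu> K (enat t))"
    by (rule test_stop[OF test])
  then obtain B where B: "B \<in> sets (PiM (obs_idx K t) (\<lambda>_. \<nu>))"
    and eq: "{\<omega>\<in>space (Omega \<nu> K). T \<omega> \<le> enat t} = (\<lambda>\<omega>. restrict \<omega> (obs_idx K t)) -` B \<inter> space (Omega \<nu> K)"
    by (auto simp: sets_filt_enat)
  have "{\<omega>\<in>space PP. enat t < T \<omega>} = (\<lambda>\<omega>. restrict \<omega> (obs_idx K t)) -` (space (PiM (obs_idx K t) (\<lambda>_. \<nu>)) - B) \<inter> space (Omega \<nu> K)"
  proof -
    have "{\<omega>\<in>space PP. enat t < T \<omega>} = space (Omega \<nu> K) - {\<omega>\<in>space (Omega \<nu> K). T \<omega> \<le> enat t}"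
      by (auto simp: space_PP)
    also have "\<dots> = (\<lambda>\<omega>. restrict \<omega> (obs_idx K t)) -` (space (PiM (obs_idx K t) (\<lambda>_. \<nu>)) - B) \<inter> space (Omega \<nu> K)"
      unfolding eq using restrict_in_space[of _ \<nu> K t] by auto
    finally show ?thesis .
  qed
  moreover have "space (PiM (obs_idx K t) (\<lambda>_. \<nu>)) - B \<in> sets (PiM (obs_idx K t) (\<lambda>_. \<nu>))"
    using B by auto
  ultimately show ?thesis using that by blast
qed

lemma gt_meas: "{\<omega>\<in>space PP. enat t < T \<omega>} \<in> sets PP"
proof -
  obtain B where B: "B \<in> sets (PiM (obs_idx K t) (\<lambda>_. \<nu>))"
    and eq: "{\<omega>\<in>space PP. enat t < T \<omega>} = (\<lambda>\<omega>. restrict \<omega> (obs_idx K t)) -` B \<inter> space (Omega \<nu> K)"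
    by (rule gt_set)
  have "(\<lambda>\<omega>. restrict \<omega> (obs_idx K t)) -` B \<inter> space (Omega \<nu> K) \<in> sets (filt \<nu> K (enat t))"
    using B by (auto simp: sets_filt_enat)
  then show ?thesis using sets_filt_sub[of \<nu> K "enat t"] eq by (auto simp: sets_PP)
qed

lemma ET_sum: "(\<integral>\<^sup>+\<omega>. ennreal_of_enat (T \<omega>) \<partial>PP) = (\<Sum>t. emeasure PP {\<omega>\<in>space PP. enat t < T \<omega>})"
proof -
  define F where "F i = {\<omega>\<in>space PP. enat i < T \<omega>}" for i :: nat
  have [measurable]: "\<And>i. F i \<in> sets PP" unfolding F_def by (rule gt_meas)
  { fix x assume "x \<in> space PP"
    have "(\<lambda>i::nat. if i < T x then 1 else 0) sums ennreal_of_enat (T x)"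
      using sums_If_finite[of "\<lambda>r. r < T x" "\<lambda>_. 1 :: ennreal"]
      by (cases "T x") (simp_all add: sums_def of_nat_tendsto_top_ennreal)
    also have "(\<lambda>i. (if i < T x then 1 else 0)) = (\<lambda>i. indicator (F i) x)"
      using \<open>x \<in> space PP\<close> by (simp add: one_ennreal_def F_def fun_eq_iff)
    finally have "ennreal_of_enat (T x) = (\<Sum>i. indicator (F i) x)"
      by (simp add: sums_iff) }
  then have "(\<integral>\<^sup>+x. ennreal_of_enat (T x) \<partial>PP) = (\<integral>\<^sup>+x. (\<Sum>i. indicator (F i) x) \<partial>PP)"
    by (simp cong: nn_integral_cong)
  also have "\<dots> = (\<Sum>i. emeasure PP (F i))"
    by (simp add: nn_integral_suminf)
  finally show ?thesis
    by (simp add: F_def)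
qed

lemma wald:
  assumes z: "\<And>k. k \<in> {1..K} \<Longrightarrow> z k \<in> borel_measurable \<nu>"
  shows "(\<integral>\<^sup>+\<omega>. (\<Sum>t. indicator {\<omega>\<in>space PP. enat t < T \<omega>} \<omega> * (\<Sum>k\<in>{1..K}. z k (\<omega> (k, Suc t)))) \<partial>PP)
      = (\<integral>\<^sup>+\<omega>. ennreal_of_enat (T \<omega>) \<partial>PP) * (\<Sum>k\<in>{1..K}. \<integral>\<^sup>+x. ennreal (p k x) * z k x \<partial>\<nu>)"
proof -
  have zm: "\<And>k t. k \<in> {1..K} \<Longrightarrow> (\<lambda>\<omega>. z k (\<omega> (k, Suc t))) \<in> borel_measurable PP"
    by (rule comp_meas) (auto simp: all_idx_def z)
  have Zk: "(\<integral>\<^sup>+x. z k x \<partial>P.Mh (k, Suc t)) = (\<integral>\<^sup>+x. ennreal (p k x) * z k x \<partial>\<nu>)" if k: "k \<in> {1..K}" for k t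
    unfolding P.Mh_def using k z[OF k] P.gh_props(1)[of k] by (simp add: nn_integral_density P.gh_def)
  have "(\<integral>\<^sup>+\<omega>. (\<Sum>t. indicator {\<omega>\<in>space PP. enat t < T \<omega>} \<omega> * (\<Sum>k\<in>{1..K}. z k (\<omega> (k, Suc t)))) \<partial>PP)
      = (\<Sum>t. \<integral>\<^sup>+\<omega>. indicator {\<omega>\<in>space PP. enat t < T \<omega>} \<omega> * (\<Sum>k\<in>{1..K}. z k (\<omega> (k, Suc t))) \<partial>PP)"
    by (rule nn_integral_suminf) (use gt_meas zm in measurable)
  also have "\<dots> = (\<Sum>t. \<Sum>k\<in>{1..K}. \<integral>\<^sup>+\<omega>. indicator {\<omega>\<in>space PP. enat t < T \<omega>} \<omega> * z k (\<omega> (k, Suc t)) \<partial>PP)"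
    by (intro suminf_cong, simp only: sum_distrib_left, rule nn_integral_sum) (use gt_meas zm in measurable)
  also have "\<dots> = (\<Sum>t. \<Sum>k\<in>{1..K}. emeasure PP {\<omega>\<in>space PP. enat t < T \<omega>} * (\<integral>\<^sup>+x. ennreal (p k x) * z k x \<partial>\<nu>))"
  proof (intro suminf_cong sum.cong refl)
    fix t k assume k: "k \<in> {1..K}"
    obtain B where B: "B \<in> sets (PiM (obs_idx K t) (\<lambda>_. \<nu>))"
      and eq: "{\<omega>\<in>space PP. enat t < T \<omega>} = (\<lambda>\<omega>. restrict \<omega> (obs_idx K t)) -` B \<inter> space (Omega \<nu> K)"
      by (rule gt_set)
    show "(\<integral>\<^sup>+\<omega>. indicator {\<omega>\<in>space PP. enat t < T \<omega>} \<omega> * z k (\<omega> (k, Suc t)) \<partial>PP)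
       = emeasure PP {\<omega>\<in>space PP. enat t < T \<omega>} * (\<integral>\<^sup>+x. ennreal (p k x) * z k x \<partial>\<nu>)"
      unfolding eq P.indep[OF B k z[OF k]] Zk[OF k] ..
  qed
  also have "\<dots> = (\<Sum>t. emeasure PP {\<omega>\<in>space PP. enat t < T \<omega>}) * (\<Sum>k\<in>{1..K}. \<integral>\<^sup>+x. ennreal (p k x) * z k x \<partial>\<nu>)"
    by (simp add: sum_distrib_left[symmetric])
  finally show ?thesis by (simp add: ET_sum)
qed

end


context testfam begin

definition ll :: "nat \<Rightarrow> 'a \<Rightarrow> real" where
  "ll k x = (if 0 < p k x \<and> 0 < q k x then ln (p k x / q k x) else 0)"
definition zp :: "nat \<Rightarrow> 'a \<Rightarrow> real" where "zp k x = max 0 (ll k x)"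
definition zn :: "nat \<Rightarrow> 'a \<Rightarrow> real" where "zn k x = max 0 (- ll k x)"

lemma zp_nn: "0 \<le> zp k x" by (simp add: zp_def)
lemma zn_nn: "0 \<le> zn k x" by (simp add: zn_def)

lemma meas_ll[measurable]: "k \<in> {1..K} \<Longrightarrow> ll k \<in> borel_measurable \<nu>"
  unfolding ll_def by measurable
lemma meas_zp[measurable]: "k \<in> {1..K} \<Longrightarrow> zp k \<in> borel_measurable \<nu>"
  unfolding zp_def by measurable
lemma meas_zn[measurable]: "k \<in> {1..K} \<Longrightarrow> zn k \<in> borel_measurable \<nu>"
  unfolding zn_def by measurable

definition SPe where
  "SPe \<omega> = (\<Sum>t. indicator {\<omega>\<in>space PP. enat t < T \<omega>} \<omega> * (\<Sum>k\<in>{1..K}. ennreal (zp k (\<omega> (k, Suc t)))))"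
definition SNe where
  "SNe \<omega> = (\<Sum>t. indicator {\<omega>\<in>space PP. enat t < T \<omega>} \<omega> * (\<Sum>k\<in>{1..K}. ennreal (zn k (\<omega> (k, Suc t)))))"
definition Re where
  "Re \<omega> = (\<Sum>n. indicator {\<omega>\<in>space PP. T \<omega> = enat n} \<omega> * ennreal (\<Prod>i\<in>obs_idx K n. rr (fst i) (\<omega> i)))"

lemma eq_meas: "{\<omega>\<in>space PP. T \<omega> = enat n} \<in> sets PP"
  using test_D_T[OF test, of "\<lambda>_. True" n] sets_filt_sub[of \<nu> K "enat n"]
  by (auto simp: sets_PP space_PP)

lemma meas_SPe: "SPe \<in> borel_measurable PP"
proof -
  have "\<And>k t. k \<in> {1..K} \<Longrightarrow> (\<lambda>\<omega>. ennreal (zp k (\<omega> (k, Suc t)))) \<in> borel_measurable PP"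
    using comp_meas[OF _ meas_zp] by (auto simp: all_idx_def)
  then show ?thesis unfolding SPe_def using gt_meas by measurable
qed

lemma meas_SNe: "SNe \<in> borel_measurable PP"
proof -
  have "\<And>k t. k \<in> {1..K} \<Longrightarrow> (\<lambda>\<omega>. ennreal (zn k (\<omega> (k, Suc t)))) \<in> borel_measurable PP"
    using comp_meas[OF _ meas_zn] by (auto simp: all_idx_def)
  then show ?thesis unfolding SNe_def using gt_meas by measurable
qed

lemma meas_prodrr: "(\<lambda>\<omega>. ennreal (\<Prod>i\<in>obs_idx K n. rr (fst i) (\<omega> i))) \<in> borel_measurable PP"
proof -
  have "\<And>i. i \<in> obs_idx K n \<Longrightarrow> (\<lambda>\<omega>. rr (fst i) (\<omega> i)) \<in> borel_measurable PP"
    using comp_meas[OF _ meas_rr] obs_sub obs_fst by blast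
  then show ?thesis by measurable
qed

lemma meas_Re: "Re \<in> borel_measurable PP"
  unfolding Re_def using eq_meas meas_prodrr by measurable

lemma SPe_val:
  assumes "\<omega> \<in> space PP" "T \<omega> = enat n"
  shows "SPe \<omega> = ennreal (\<Sum>t<n. \<Sum>k\<in>{1..K}. zp k (\<omega> (k, Suc t)))"
proof -
  have "SPe \<omega> = (\<Sum>t<n. indicator {\<omega>\<in>space PP. enat t < T \<omega>} \<omega> * (\<Sum>k\<in>{1..K}. ennreal (zp k (\<omega> (k, Suc t)))))"
    unfolding SPe_def by (rule suminf_finite) (use assms in auto)
  also have "\<dots> = (\<Sum>t<n. (\<Sum>k\<in>{1..K}. ennreal (zp k (\<omega> (k, Suc t)))))"
    using assms by (intro sum.cong) auto
  also have "\<dots> = ennreal (\<Sum>t<n. \<Sum>k\<in>{1..K}. zp k (\<omega> (k, Suc t)))"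
    by (simp add: zp_nn sum_nonneg)
  finally show ?thesis .
qed

lemma SNe_val:
  assumes "\<omega> \<in> space PP" "T \<omega> = enat n"
  shows "SNe \<omega> = ennreal (\<Sum>t<n. \<Sum>k\<in>{1..K}. zn k (\<omega> (k, Suc t)))"
proof -
  have "SNe \<omega> = (\<Sum>t<n. indicator {\<omega>\<in>space PP. enat t < T \<omega>} \<omega> * (\<Sum>k\<in>{1..K}. ennreal (zn k (\<omega> (k, Suc t)))))"
    unfolding SNe_def by (rule suminf_finite) (use assms in auto)
  also have "\<dots> = (\<Sum>t<n. (\<Sum>k\<in>{1..K}. ennreal (zn k (\<omega> (k, Suc t)))))"
    using assms by (intro sum.cong) auto
  also have "\<dots> = ennreal (\<Sum>t<n. \<Sum>k\<in>{1..K}. zn k (\<omega> (k, Suc t)))"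
    by (simp add: zn_nn sum_nonneg)
  finally show ?thesis .
qed

lemma Re_val:
  assumes "\<omega> \<in> space PP" "T \<omega> = enat n"
  shows "Re \<omega> = ennreal (\<Prod>i\<in>obs_idx K n. rr (fst i) (\<omega> i))"
proof -
  have "Re \<omega> = (\<Sum>m\<in>{n}. indicator {\<omega>\<in>space PP. T \<omega> = enat m} \<omega> * ennreal (\<Prod>i\<in>obs_idx K m. rr (fst i) (\<omega> i)))"
    unfolding Re_def by (rule suminf_finite) (use assms in auto)
  then show ?thesis using assms by simp
qed

lemma prod_rr:
  assumes good: "\<forall>i\<in>all_idx K. 0 < p (fst i) (\<omega> i) \<and> 0 < q (fst i) (\<omega> i)"
  shows "(\<Prod>i\<in>obs_idx K n. rr (fst i) (\<omega> i))
     = exp ((\<Sum>t<n. \<Sum>k\<in>{1..K}. zn k (\<omega> (k, Suc t))) - (\<Sum>t<n. \<Sum>k\<in>{1..K}. zp k (\<omega> (k, Suc t))))"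
proof -
  have "(\<Prod>i\<in>obs_idx K n. rr (fst i) (\<omega> i)) = (\<Prod>i\<in>obs_idx K n. exp (- ll (fst i) (\<omega> i)))"
  proof (rule prod.cong[OF refl])
    fix i assume i: "i \<in> obs_idx K n"
    then have "0 < p (fst i) (\<omega> i)" "0 < q (fst i) (\<omega> i)" using good obs_sub by blast+
    then show "rr (fst i) (\<omega> i) = exp (- ll (fst i) (\<omega> i))"
      by (simp add: rr_def ll_def ln_div exp_diff)
  qed
  also have "\<dots> = exp (\<Sum>i\<in>obs_idx K n. - ll (fst i) (\<omega> i))"
    by (simp add: exp_sum)
  also have "(\<Sum>i\<in>obs_idx K n. - ll (fst i) (\<omega> i)) = (\<Sum>k\<in>{1..K}. \<Sum>s\<in>{1..n}. - ll k (\<omega> (k, s)))"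
    unfolding obs_idx_def by (simp add: sum.cartesian_product split_def)
  also have "\<dots> = (\<Sum>k\<in>{1..K}. \<Sum>t<n. - ll k (\<omega> (k, Suc t)))"
    by (simp add: sum.atLeast1_atMost_eq)
  also have "\<dots> = (\<Sum>t<n. \<Sum>k\<in>{1..K}. zn k (\<omega> (k, Suc t)) - zp k (\<omega> (k, Suc t)))"
    by (subst sum.swap) (auto intro!: sum.cong simp: zn_def zp_def)
  also have "\<dots> = (\<Sum>t<n. \<Sum>k\<in>{1..K}. zn k (\<omega> (k, Suc t))) - (\<Sum>t<n. \<Sum>k\<in>{1..K}. zp k (\<omega> (k, Suc t)))"
    by (simp add: sum_subtractf)
  finally show ?thesis .
qed

lemma point_ineq:
  fixes sp sn c :: real
  assumes "0 \<le> sp" "0 \<le> sn" "0 < c"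
  shows "ennreal sn + ennreal (1 + max 0 (- ln c)) \<le> ennreal sp + ennreal (exp (sn - sp)) * ennreal (1 / c) + ennreal (max 0 (ln c))"
proof -
  have "ln (exp (sn - sp) / c) \<le> exp (sn - sp) / c - 1"
    using assms by (intro ln_le_minus_one) auto
  then have "sn - sp - ln c \<le> exp (sn - sp) / c - 1"
    using assms by (simp add: ln_div)
  then have r: "sn + (1 + max 0 (- ln c)) \<le> sp + exp (sn - sp) * (1 / c) + max 0 (ln c)"
    by (auto simp: max_def)
  have "ennreal sn + ennreal (1 + max 0 (- ln c)) = ennreal (sn + (1 + max 0 (- ln c)))"
    using assms by (simp add: ennreal_plus)
  also have "\<dots> \<le> ennreal (sp + exp (sn - sp) * (1 / c) + max 0 (ln c))"
    by (rule ennreal_leI[OF r])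
  also have "\<dots> = ennreal sp + ennreal (exp (sn - sp)) * ennreal (1 / c) + ennreal (max 0 (ln c))"
  proof -
    have h1: "ennreal (exp (sn - sp) * (1 / c)) = ennreal (exp (sn - sp)) * ennreal (1 / c)"
      by (rule ennreal_mult) (use assms in auto)
    have h2: "ennreal (sp + exp (sn - sp) * (1 / c) + max 0 (ln c)) = ennreal (sp + exp (sn - sp) * (1 / c)) + ennreal (max 0 (ln c))"
      by (rule ennreal_plus) (use assms in auto)
    have h3: "ennreal (sp + exp (sn - sp) * (1 / c)) = ennreal sp + ennreal (exp (sn - sp) * (1 / c))"
      by (rule ennreal_plus) (use assms in auto)
    show ?thesis unfolding h2 h3 h1 ..
  qed
  finally show ?thesis .
qed

end


context testfam begin

lemma An_set:
  obtains B where "B \<in> sets (PiM (obs_idx K n) (\<lambda>_. \<nu>))"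
    "{\<omega>\<in>space PP. Pr (D \<omega>) \<and> T \<omega> = enat n} = (\<lambda>\<omega>. restrict \<omega> (obs_idx K n)) -` B \<inter> space (Omega \<nu> K)"
  using test_D_T[OF test, of Pr n] unfolding sets_filt_enat space_PP by blast

lemma An_meas: "{\<omega>\<in>space PP. Pr (D \<omega>) \<and> T \<omega> = enat n} \<in> sets PP"
  using test_D_T[OF test, of Pr n] sets_filt_sub[of \<nu> K "enat n"] by (auto simp: sets_PP space_PP)

lemma A_meas: "{\<omega>\<in>space PP. Pr (D \<omega>)} \<in> sets PP"
  using test_D_meas[OF test, of Pr] by (simp add: sets_PP space_PP)

lemma Re_int:
  "(\<integral>\<^sup>+\<omega>. indicator {\<omega>\<in>space PP. Pr (D \<omega>)} \<omega> * Re \<omega> \<partial>PP) \<le> emeasure QQ {\<omega>\<in>space PP. Pr (D \<omega>)}"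
proof -
  define A where "A n = {\<omega>\<in>space PP. Pr (D \<omega>) \<and> T \<omega> = enat n}" for n
  have Am: "\<And>n. A n \<in> sets PP" unfolding A_def by (rule An_meas)
  have "(\<integral>\<^sup>+\<omega>. indicator {\<omega>\<in>space PP. Pr (D \<omega>)} \<omega> * Re \<omega> \<partial>PP)
     = (\<integral>\<^sup>+\<omega>. (\<Sum>n. indicator (A n) \<omega> * ennreal (\<Prod>i\<in>obs_idx K n. rr (fst i) (\<omega> i))) \<partial>PP)"
    unfolding Re_def ennreal_suminf_cmult[symmetric]
    by (intro nn_integral_cong suminf_cong) (auto simp: A_def indicator_def)
  also have "\<dots> = (\<Sum>n. \<integral>\<^sup>+\<omega>. indicator (A n) \<omega> * ennreal (\<Prod>i\<in>obs_idx K n. rr (fst i) (\<omega> i)) \<partial>PP)"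
    by (rule nn_integral_suminf) (use Am meas_prodrr in measurable)
  also have "\<dots> \<le> (\<Sum>n. emeasure QQ (A n))"
  proof (rule suminf_le)
    fix n
    obtain B where B: "B \<in> sets (PiM (obs_idx K n) (\<lambda>_. \<nu>))"
      and eq: "A n = (\<lambda>\<omega>. restrict \<omega> (obs_idx K n)) -` B \<inter> space (Omega \<nu> K)"
      unfolding A_def by (rule An_set)
    show "(\<integral>\<^sup>+\<omega>. indicator (A n) \<omega> * ennreal (\<Prod>i\<in>obs_idx K n. rr (fst i) (\<omega> i)) \<partial>PP) \<le> emeasure QQ (A n)"
      unfolding eq by (rule change[OF B])
  qed auto
  also have "\<dots> = emeasure QQ (\<Union>n. A n)"
  proof (rule suminf_emeasure)
    show "range A \<subseteq> sets QQ" using Am by (auto simp: sets_PP sets_QQ)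
    show "disjoint_family A" by (auto simp: disjoint_family_on_def A_def)
  qed
  also have "\<dots> \<le> emeasure QQ {\<omega>\<in>space PP. Pr (D \<omega>)}"
    by (rule emeasure_mono) (use A_meas in \<open>auto simp: A_def sets_PP sets_QQ\<close>)
  finally show ?thesis .
qed

lemma per_A_enn:
  fixes Pr :: "nat set \<Rightarrow> bool"
  assumes c: "0 < c"
  defines "A \<equiv> {\<omega>\<in>space PP. Pr (D \<omega>)}"
  shows "(\<integral>\<^sup>+\<omega>. indicator A \<omega> * SNe \<omega> \<partial>PP) + emeasure PP A * ennreal (1 + max 0 (- ln c))
    \<le> (\<integral>\<^sup>+\<omega>. indicator A \<omega> * SPe \<omega> \<partial>PP) + emeasure QQ A * ennreal (1 / c) + emeasure PP A * ennreal (max 0 (ln c))"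
proof -
  have Am: "A \<in> sets PP" unfolding A_def by (rule A_meas)
  have "(\<integral>\<^sup>+\<omega>. indicator A \<omega> * SNe \<omega> \<partial>PP) + emeasure PP A * ennreal (1 + max 0 (- ln c))
      = (\<integral>\<^sup>+\<omega>. indicator A \<omega> * (SNe \<omega> + ennreal (1 + max 0 (- ln c))) \<partial>PP)"
    using Am meas_SNe by (simp add: distrib_left nn_integral_add nn_integral_multc)
  also have "\<dots> \<le> (\<integral>\<^sup>+\<omega>. indicator A \<omega> * (SPe \<omega> + Re \<omega> * ennreal (1 / c) + ennreal (max 0 (ln c))) \<partial>PP)"
  proof (rule nn_integral_mono_AE)
    show "AE \<omega> in PP. indicator A \<omega> * (SNe \<omega> + ennreal (1 + max 0 (- ln c)))
          \<le> indicator A \<omega> * (SPe \<omega> + Re \<omega> * ennreal (1 / c) + ennreal (max 0 (ln c)))"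
      using AE_good Tfin
    proof eventually_elim
      case (elim \<omega>)
      show ?case
      proof (cases "\<omega> \<in> A")
        case True
        then have \<omega>: "\<omega> \<in> space PP" by (auto simp: A_def)
        obtain n where n: "T \<omega> = enat n" using elim(2) by auto
        define sp where "sp = (\<Sum>t<n. \<Sum>k\<in>{1..K}. zp k (\<omega> (k, Suc t)))"
        define sn where "sn = (\<Sum>t<n. \<Sum>k\<in>{1..K}. zn k (\<omega> (k, Suc t)))"
        have pi: "ennreal sn + ennreal (1 + max 0 (- ln c)) \<le> ennreal sp + ennreal (exp (sn - sp)) * ennreal (1 / c) + ennreal (max 0 (ln c))"
          by (rule point_ineq) (auto simp: sp_def sn_def intro!: sum_nonneg zp_nn zn_nn c)
        have i1: "indicator A \<omega> = (1::ennreal)" using True by simp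
        show ?thesis
          unfolding i1 mult_1 SPe_val[OF \<omega> n] SNe_val[OF \<omega> n] Re_val[OF \<omega> n] prod_rr[OF elim(1)]
          using pi unfolding sp_def sn_def .
      qed simp
    qed
  qed
  also have "\<dots> = (\<integral>\<^sup>+\<omega>. indicator A \<omega> * SPe \<omega> \<partial>PP) + (\<integral>\<^sup>+\<omega>. indicator A \<omega> * Re \<omega> \<partial>PP) * ennreal (1 / c)
          + emeasure PP A * ennreal (max 0 (ln c))"
    using Am meas_SPe meas_Re
    by (simp add: distrib_left nn_integral_add nn_integral_multc mult.assoc[symmetric])
  also have "\<dots> \<le> (\<integral>\<^sup>+\<omega>. indicator A \<omega> * SPe \<omega> \<partial>PP) + emeasure QQ A * ennreal (1 / c) + emeasure PP A * ennreal (max 0 (ln c))"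
    using Re_int[of Pr] unfolding A_def[symmetric] by (intro add_mono mult_right_mono order_refl) auto
  finally show ?thesis .
qed

end


lemma numeric:
  fixes a b e f :: real
  assumes a: "0 < a" and b: "0 < b" and ab: "a + b < 1/2" and e: "0 \<le> e" "e \<le> a" and f: "0 \<le> f" "f \<le> b"
  shows "phi (a + b) b \<le> 1 - (1 - f) / ((1 - b) / (a + b)) - f / (b / (1 - (a + b)))
            - e * ln ((1 - b) / (a + b)) - (1 - e) * ln (b / (1 - (a + b)))"
proof -
  define x where "x = a + b"
  have x: "0 < x" "x < 1/2" "x + b < 1" using a b ab by (auto simp: x_def)
  define L1 where "L1 = ln (x / (1 - b))"
  define L2 where "L2 = ln ((1 - x) / b)"
  have r1: "x / (1 - b) < 1" using x b by (simp add: divide_less_eq)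
  have r2: "1 < (1 - x) / b" using x b by (simp add: less_divide_eq)
  have L12: "L1 < L2"
  proof -
    have "L1 < 0" unfolding L1_def using r1 x b by (intro ln_less_zero) auto
    moreover have "0 < L2" unfolding L2_def using r2 by simp
    ultimately show ?thesis by simp
  qed
  have lnc1: "ln ((1 - b) / x) = - L1" unfolding L1_def using x b by (simp add: ln_div)
  have lnc2: "ln (b / (1 - x)) = - L2" unfolding L2_def using x b by (simp add: ln_div)
  have phi: "phi x b = x * L1 + (1 - x) * L2" by (simp add: phi_def L1_def L2_def)
  have g: "1 - (1 - f) / ((1 - b) / x) - f / (b / (1 - x)) = (b - f) * ((1 - x) / b - x / (1 - b))"
    using x b by (simp add: field_simps)
  have g0: "0 \<le> (b - f) * ((1 - x) / b - x / (1 - b))" using f r1 r2 by simp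
  have h0: "0 \<le> (x - e) * (L2 - L1)" using L12 e x_def b by simp
  have "phi x b \<le> 1 - (1 - f) / ((1 - b) / x) - f / (b / (1 - x)) - e * ln ((1 - b) / x) - (1 - e) * ln (b / (1 - x))"
    unfolding lnc1 lnc2 phi g using g0 h0 by (simp add: algebra_simps)
  then show ?thesis by (simp add: x_def)
qed



lemma enn_ineq_real:
  fixes n P pp Q c :: real
  assumes le: "ennreal n + ennreal P * ennreal (1 + max 0 (- ln c))
     \<le> ennreal pp + ennreal Q * ennreal (1 / c) + ennreal P * ennreal (max 0 (ln c))"
    and nn: "0 \<le> n" "0 \<le> P" "0 \<le> pp" "0 \<le> Q" and c: "0 < c"
  shows "n + P \<le> pp + Q / c + P * ln c"
proof -
  have "ennreal (n + P * (1 + max 0 (- ln c))) = ennreal n + ennreal (P * (1 + max 0 (- ln c)))"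
    by (rule ennreal_plus) (use nn in auto)
  also have "ennreal (P * (1 + max 0 (- ln c))) = ennreal P * ennreal (1 + max 0 (- ln c))"
    by (rule ennreal_mult) (use nn in auto)
  finally have e1: "ennreal n + ennreal P * ennreal (1 + max 0 (- ln c)) = ennreal (n + P * (1 + max 0 (- ln c)))" ..
  have "ennreal (pp + Q * (1 / c) + P * max 0 (ln c)) = ennreal (pp + Q * (1 / c)) + ennreal (P * max 0 (ln c))"
    by (rule ennreal_plus) (use nn c in auto)
  also have "ennreal (pp + Q * (1 / c)) = ennreal pp + ennreal (Q * (1 / c))"
    by (rule ennreal_plus) (use nn c in auto)
  also have "ennreal (Q * (1 / c)) = ennreal Q * ennreal (1 / c)"
    by (rule ennreal_mult) (use nn c in auto)
  also have "ennreal (P * max 0 (ln c)) = ennreal P * ennreal (max 0 (ln c))"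
    by (rule ennreal_mult) (use nn in auto)
  finally have e2: "ennreal pp + ennreal Q * ennreal (1 / c) + ennreal P * ennreal (max 0 (ln c))
      = ennreal (pp + Q * (1 / c) + P * max 0 (ln c))" ..
  note e1 e2
  have "ennreal (n + P * (1 + max 0 (- ln c))) \<le> ennreal (pp + Q * (1 / c) + P * max 0 (ln c))"
    using le unfolding e1 e2 .
  then have "n + P * (1 + max 0 (- ln c)) \<le> pp + Q * (1 / c) + P * max 0 (ln c)"
    by (rule ennreal_le_iff[THEN iffD1, rotated]) (use nn c in \<open>auto intro!: add_nonneg_nonneg mult_nonneg_nonneg\<close>)
  moreover have "max 0 (ln c) = ln c + max 0 (- ln c)" by auto
  then have "P * max 0 (ln c) = P * ln c + P * max 0 (- ln c)" by (simp add: ring_distribs)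
  moreover have "P * (1 + max 0 (- ln c)) = P + P * max 0 (- ln c)" by (simp add: ring_distribs)
  ultimately show ?thesis by simp
qed

context testfam begin

lemma psP: "prob_space PP" by (rule prob_space_PiM) (rule P.prob_Mh)
lemma psQ: "prob_space QQ" by (rule prob_space_PiM) (rule Q.prob_Mh)

lemma ZP_le:
  assumes k: "k \<in> {1..K}"
  shows "(\<integral>\<^sup>+x. ennreal (p k x) * ennreal (zp k x) \<partial>\<nu>) \<le> (\<integral>\<^sup>+x. kl_pos (p k) (q k) x \<partial>\<nu>)"
proof (rule nn_integral_mono)
  fix x assume x: "x \<in> space \<nu>"
  have pn: "0 \<le> p k x" "0 \<le> q k x" using P.g_nn Q.g_nn k x by auto
  show "ennreal (p k x) * ennreal (zp k x) \<le> kl_pos (p k) (q k) x"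
  proof (cases "0 < p k x \<and> 0 < q k x")
    case True
    define l where "l = ln (p k x / q k x)"
    have z: "zp k x = max 0 l" using True by (simp add: zp_def ll_def l_def)
    have kp: "kl_pos (p k) (q k) x = ennreal (p k x * l)" using True by (simp add: kl_pos_def l_def)
    show ?thesis
    proof (cases "0 \<le> l")
      case True
      then show ?thesis unfolding z kp using pn by (simp add: ennreal_mult)
    next
      case False
      then show ?thesis unfolding z kp by simp
    qed
  next
    case False
    then have "p k x = 0 \<or> (0 < p k x \<and> q k x = 0)" using pn by auto
    then show ?thesis by (auto simp: zp_def ll_def kl_pos_def)
  qed
qed

lemma ZN_eq:
  assumes k: "k \<in> {1..K}"
  shows "(\<integral>\<^sup>+x. ennreal (p k x) * ennreal (zn k x) \<partial>\<nu>) = (\<integral>\<^sup>+x. kl_neg (p k) (q k) x \<partial>\<nu>)"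
proof (rule nn_integral_cong)
  fix x assume x: "x \<in> space \<nu>"
  have pn: "0 \<le> p k x" "0 \<le> q k x" using P.g_nn Q.g_nn k x by auto
  show "ennreal (p k x) * ennreal (zn k x) = kl_neg (p k) (q k) x"
  proof (cases "0 < p k x \<and> 0 < q k x")
    case True
    define l where "l = ln (p k x / q k x)"
    have z: "zn k x = max 0 (- l)" using True by (simp add: zn_def ll_def l_def)
    have kp: "kl_neg (p k) (q k) x = ennreal (- (p k x * l))" using True by (simp add: kl_neg_def l_def)
    show ?thesis
    proof (cases "0 \<le> - l")
      case True
      then show ?thesis unfolding z kp using pn by (simp add: ennreal_mult[symmetric])
    next
      case False
      then have "- (p k x * l) \<le> 0" using pn by (simp add: mult_nonneg_nonpos)
      then show ?thesis unfolding z kp using False by (simp add: ennreal_neg)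
    qed
  next
    case False
    then have "p k x = 0 \<or> q k x = 0" using pn by auto
    then show ?thesis by (auto simp: zn_def ll_def kl_neg_def)
  qed
qed

lemma klneg_fin:
  assumes k: "k \<in> {1..K}"
  shows "(\<integral>\<^sup>+x. kl_neg (p k) (q k) x \<partial>\<nu>) \<le> 1"
proof -
  have "(\<integral>\<^sup>+x. kl_neg (p k) (q k) x \<partial>\<nu>) \<le> (\<integral>\<^sup>+x. ennreal (q k x) \<partial>\<nu>)"
  proof (rule nn_integral_mono)
    fix x assume x: "x \<in> space \<nu>"
    have pn: "0 \<le> p k x" "0 \<le> q k x" using P.g_nn Q.g_nn k x by auto
    show "kl_neg (p k) (q k) x \<le> ennreal (q k x)"
    proof (cases "0 < p k x \<and> 0 < q k x")
      case True
      have "ln (q k x / p k x) \<le> q k x / p k x - 1" using True by (intro ln_le_minus_one) auto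
      then have "p k x * ln (q k x / p k x) \<le> p k x * (q k x / p k x - 1)"
        using True by (intro mult_left_mono) auto
      also have "\<dots> \<le> q k x" using True by (simp add: field_simps)
      finally have "p k x * ln (q k x / p k x) \<le> q k x" .
      moreover have "- (p k x * ln (p k x / q k x)) = p k x * ln (q k x / p k x)"
        using True by (simp add: ln_div algebra_simps)
      ultimately have "- (p k x * ln (p k x / q k x)) \<le> q k x" by linarith
      then show ?thesis using True by (auto simp: kl_neg_def intro: ennreal_leI)
    next
      case False
      then have "p k x = 0 \<or> q k x = 0" using pn by auto
      then show ?thesis by (auto simp: kl_neg_def)
    qed
  qed
  also have "\<dots> = 1" using Q.g_int k by simp
  finally show ?thesis .
qed

lemma SP_int:
  "(\<integral>\<^sup>+\<omega>. SPe \<omega> \<partial>PP) = (\<integral>\<^sup>+\<omega>. ennreal_of_enat (T \<omega>) \<partial>PP) * (\<Sum>k\<in>{1..K}. \<integral>\<^sup>+x. ennreal (p k x) * ennreal (zp k x) \<partial>\<nu>)"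
  unfolding SPe_def by (rule wald[of "\<lambda>k x. ennreal (zp k x)"]) simp

lemma SN_int:
  "(\<integral>\<^sup>+\<omega>. SNe \<omega> \<partial>PP) = (\<integral>\<^sup>+\<omega>. ennreal_of_enat (T \<omega>) \<partial>PP) * (\<Sum>k\<in>{1..K}. \<integral>\<^sup>+x. ennreal (p k x) * ennreal (zn k x) \<partial>\<nu>)"
  unfolding SNe_def by (rule wald[of "\<lambda>k x. ennreal (zn k x)"]) simp

lemma split_int:
  assumes X: "X \<in> borel_measurable PP"
  shows "(\<integral>\<^sup>+\<omega>. indicator {\<omega>\<in>space PP. Pr (D \<omega>)} \<omega> * X \<omega> \<partial>PP)
       + (\<integral>\<^sup>+\<omega>. indicator {\<omega>\<in>space PP. \<not> Pr (D \<omega>)} \<omega> * X \<omega> \<partial>PP) = (\<integral>\<^sup>+\<omega>. X \<omega> \<partial>PP)"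
proof -
  have m1: "{\<omega>\<in>space PP. Pr (D \<omega>)} \<in> sets PP" by (rule A_meas)
  have m2: "{\<omega>\<in>space PP. \<not> Pr (D \<omega>)} \<in> sets PP" by (rule A_meas)
  have "(\<integral>\<^sup>+\<omega>. indicator {\<omega>\<in>space PP. Pr (D \<omega>)} \<omega> * X \<omega> \<partial>PP)
       + (\<integral>\<^sup>+\<omega>. indicator {\<omega>\<in>space PP. \<not> Pr (D \<omega>)} \<omega> * X \<omega> \<partial>PP)
      = (\<integral>\<^sup>+\<omega>. indicator {\<omega>\<in>space PP. Pr (D \<omega>)} \<omega> * X \<omega> + indicator {\<omega>\<in>space PP. \<not> Pr (D \<omega>)} \<omega> * X \<omega> \<partial>PP)"
    by (rule nn_integral_add[symmetric]) (use m1 m2 X in auto)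
  also have "\<dots> = (\<integral>\<^sup>+\<omega>. X \<omega> \<partial>PP)"
    by (rule nn_integral_cong) (auto simp: indicator_def)
  finally show ?thesis .
qed

end


context testfam begin

lemma int_A_le: "(\<integral>\<^sup>+\<omega>. indicator A \<omega> * X \<omega> \<partial>PP) \<le> (\<integral>\<^sup>+\<omega>. X \<omega> \<partial>PP)"
  by (rule nn_integral_mono) (auto simp: indicator_def)

lemma core:
  fixes Pr :: "nat set \<Rightarrow> bool" and a b t :: real
  assumes ET: "(\<integral>\<^sup>+\<omega>. ennreal_of_enat (T \<omega>) \<partial>PP) = ennreal t" and t: "0 \<le> t"
    and a: "0 < a" and b: "0 < b" and ab: "a + b < 1/2"
    and PE: "measure PP {\<omega>\<in>space PP. Pr (D \<omega>)} \<le> a"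
    and QE: "measure QQ {\<omega>\<in>space PP. \<not> Pr (D \<omega>)} \<le> b"
  shows "phi (a + b) b \<le> t * (\<Sum>k\<in>{1..K}. enn2real (\<integral>\<^sup>+x. kl_pos (p k) (q k) x \<partial>\<nu>) - enn2real (\<integral>\<^sup>+x. kl_neg (p k) (q k) x \<partial>\<nu>))"
proof -
  have PPeq: "\<And>A. emeasure PP A = ennreal (measure PP A)"
    by (rule finite_measure.emeasure_eq_measure[OF prob_space.finite_measure[OF psP]])
  have QQeq: "\<And>A. emeasure QQ A = ennreal (measure QQ A)"
    by (rule finite_measure.emeasure_eq_measure[OF prob_space.finite_measure[OF psQ]])
  define E where "E = {\<omega>\<in>space PP. Pr (D \<omega>)}"
  define E' where "E' = {\<omega>\<in>space PP. \<not> Pr (D \<omega>)}"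
  have Em: "E \<in> sets PP" "E' \<in> sets PP" unfolding E_def E'_def by (rule A_meas)+
  have E'c: "E' = space PP - E" by (auto simp: E_def E'_def)
  have QE'c: "E = space QQ - E'" by (auto simp: E_def E'_def space_PP space_QQ)
  have EmQ: "E' \<in> sets QQ" using Em by (simp add: sets_PP sets_QQ)
  define c1 where "c1 = (1 - b) / (a + b)"
  define c2 where "c2 = b / (1 - (a + b))"
  have c1: "0 < c1" using a b ab by (simp add: c1_def)
  have c2: "0 < c2" using a b ab by (simp add: c2_def)
  define IP where "IP k = enn2real (\<integral>\<^sup>+x. kl_pos (p k) (q k) x \<partial>\<nu>)" for k
  define IN where "IN k = enn2real (\<integral>\<^sup>+x. kl_neg (p k) (q k) x \<partial>\<nu>)" for k
  define ZP where "ZP k = enn2real (\<integral>\<^sup>+x. ennreal (p k x) * ennreal (zp k x) \<partial>\<nu>)" for k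
  have ZPe: "(\<integral>\<^sup>+x. ennreal (p k x) * ennreal (zp k x) \<partial>\<nu>) = ennreal (ZP k)" if k: "k \<in> {1..K}" for k
    unfolding ZP_def using ZP_le[OF k] klfin[OF k] by (intro ennreal_enn2real[symmetric]) (auto simp: top_unique)
  have ZPle: "ZP k \<le> IP k" if k: "k \<in> {1..K}" for k
    unfolding ZP_def IP_def using ZP_le[OF k] klfin[OF k] by (intro enn2real_mono) auto
  have INe: "(\<integral>\<^sup>+x. ennreal (p k x) * ennreal (zn k x) \<partial>\<nu>) = ennreal (IN k)" if k: "k \<in> {1..K}" for k
    unfolding IN_def ZN_eq[OF k]
    by (intro ennreal_enn2real[symmetric] order.strict_trans1[OF klneg_fin[OF k] ennreal_one_less_top])
  have ZPn: "0 \<le> ZP k" "0 \<le> IN k" for k by (auto simp: ZP_def IN_def)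
  have SPi: "(\<integral>\<^sup>+\<omega>. SPe \<omega> \<partial>PP) = ennreal (t * (\<Sum>k\<in>{1..K}. ZP k))"
    unfolding SP_int ET using ZPe ZPn t by (simp add: ennreal_mult sum_nonneg)
  have SNi: "(\<integral>\<^sup>+\<omega>. SNe \<omega> \<partial>PP) = ennreal (t * (\<Sum>k\<in>{1..K}. IN k))"
    unfolding SN_int ET using INe ZPn t by (simp add: ennreal_mult sum_nonneg)
  define xPE where "xPE = enn2real (\<integral>\<^sup>+\<omega>. indicator E \<omega> * SPe \<omega> \<partial>PP)"
  define xPE' where "xPE' = enn2real (\<integral>\<^sup>+\<omega>. indicator E' \<omega> * SPe \<omega> \<partial>PP)"
  define xNE where "xNE = enn2real (\<integral>\<^sup>+\<omega>. indicator E \<omega> * SNe \<omega> \<partial>PP)"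
  define xNE' where "xNE' = enn2real (\<integral>\<^sup>+\<omega>. indicator E' \<omega> * SNe \<omega> \<partial>PP)"
  have fin: "(\<integral>\<^sup>+\<omega>. indicator A \<omega> * SPe \<omega> \<partial>PP) = ennreal (enn2real (\<integral>\<^sup>+\<omega>. indicator A \<omega> * SPe \<omega> \<partial>PP))"
     "(\<integral>\<^sup>+\<omega>. indicator A \<omega> * SNe \<omega> \<partial>PP) = ennreal (enn2real (\<integral>\<^sup>+\<omega>. indicator A \<omega> * SNe \<omega> \<partial>PP))" for A
  proof -
    have "(\<integral>\<^sup>+\<omega>. indicator A \<omega> * SPe \<omega> \<partial>PP) \<noteq> \<top>"
      using int_A_le[of A SPe] unfolding SPi by (auto simp: top_unique)
    then show "(\<integral>\<^sup>+\<omega>. indicator A \<omega> * SPe \<omega> \<partial>PP) = ennreal (enn2real (\<integral>\<^sup>+\<omega>. indicator A \<omega> * SPe \<omega> \<partial>PP))" by (simp add: less_top)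
    have "(\<integral>\<^sup>+\<omega>. indicator A \<omega> * SNe \<omega> \<partial>PP) \<noteq> \<top>"
      using int_A_le[of A SNe] unfolding SNi by (auto simp: top_unique)
    then show "(\<integral>\<^sup>+\<omega>. indicator A \<omega> * SNe \<omega> \<partial>PP) = ennreal (enn2real (\<integral>\<^sup>+\<omega>. indicator A \<omega> * SNe \<omega> \<partial>PP))" by (simp add: less_top)
  qed
  have xn: "0 \<le> xPE" "0 \<le> xPE'" "0 \<le> xNE" "0 \<le> xNE'" by (auto simp: xPE_def xPE'_def xNE_def xNE'_def)
  have sumP: "xPE + xPE' = t * (\<Sum>k\<in>{1..K}. ZP k)"
  proof -
    have "ennreal (xPE + xPE') = ennreal (t * (\<Sum>k\<in>{1..K}. ZP k))"
      using split_int[OF meas_SPe, of Pr] fin(1)[of E] fin(1)[of E'] xn unfolding SPi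
      by (simp add: ennreal_plus xPE_def xPE'_def E_def E'_def)
    then show ?thesis using xn t ZPn by (subst (asm) ennreal_inj) (auto intro!: mult_nonneg_nonneg sum_nonneg)
  qed
  have sumN: "xNE + xNE' = t * (\<Sum>k\<in>{1..K}. IN k)"
  proof -
    have "ennreal (xNE + xNE') = ennreal (t * (\<Sum>k\<in>{1..K}. IN k))"
      using split_int[OF meas_SNe, of Pr] fin(2)[of E] fin(2)[of E'] xn unfolding SNi
      by (simp add: ennreal_plus xNE_def xNE'_def E_def E'_def)
    then show ?thesis using xn t ZPn by (subst (asm) ennreal_inj) (auto intro!: mult_nonneg_nonneg sum_nonneg)
  qed
  have i1: "xNE + measure PP E \<le> xPE + measure QQ E / c1 + measure PP E * ln c1"
  proof (rule enn_ineq_real[OF _ xn(3) _ xn(1) _ c1])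
    show "ennreal xNE + ennreal (measure PP E) * ennreal (1 + max 0 (- ln c1))
      \<le> ennreal xPE + ennreal (measure QQ E) * ennreal (1 / c1) + ennreal (measure PP E) * ennreal (max 0 (ln c1))"
      using per_A_enn[OF c1, of Pr] fin(1)[of E] fin(2)[of E]
      unfolding PPeq QQeq E_def[symmetric] xNE_def xPE_def by simp
  qed auto
  have i2: "xNE' + measure PP E' \<le> xPE' + measure QQ E' / c2 + measure PP E' * ln c2"
  proof (rule enn_ineq_real[OF _ xn(4) _ xn(2) _ c2])
    show "ennreal xNE' + ennreal (measure PP E') * ennreal (1 + max 0 (- ln c2))
      \<le> ennreal xPE' + ennreal (measure QQ E') * ennreal (1 / c2) + ennreal (measure PP E') * ennreal (max 0 (ln c2))"
      using per_A_enn[OF c2, of "\<lambda>S. \<not> Pr S"] fin(1)[of E'] fin(2)[of E']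
      unfolding PPeq QQeq E'_def[symmetric] xNE'_def xPE'_def by simp
  qed auto
  have pc: "measure PP E' = 1 - measure PP E" unfolding E'c by (rule prob_space.prob_compl[OF psP Em(1)])
  have qc: "measure QQ E = 1 - measure QQ E'" unfolding QE'c by (rule prob_space.prob_compl[OF psQ EmQ])
  have num: "phi (a + b) b \<le> 1 - (1 - measure QQ E') / c1 - measure QQ E' / c2
            - measure PP E * ln c1 - (1 - measure PP E) * ln c2"
    unfolding c1_def c2_def
    by (rule numeric[OF a b ab]) (use PE QE in \<open>auto simp: E_def E'_def\<close>)
  have "1 - (1 - measure QQ E') / c1 - measure QQ E' / c2 - measure PP E * ln c1 - (1 - measure PP E) * ln c2
      \<le> t * (\<Sum>k\<in>{1..K}. ZP k) - t * (\<Sum>k\<in>{1..K}. IN k)"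
    using i1 i2 sumP sumN unfolding pc qc by simp
  also have "\<dots> \<le> t * (\<Sum>k\<in>{1..K}. IP k) - t * (\<Sum>k\<in>{1..K}. IN k)"
    using t ZPle by (intro diff_right_mono mult_left_mono sum_mono) auto
  also have "\<dots> = t * (\<Sum>k\<in>{1..K}. IP k - IN k)"
    by (simp add: sum_subtractf right_diff_distrib)
  finally show ?thesis using num unfolding IP_def IN_def by simp
qed

end


lemma ln_strict: fixes w :: real assumes "0 < w" "w \<noteq> 1" shows "ln w < w - 1"
proof -
  have s: "0 < sqrt w" "sqrt w \<noteq> 1" using assms by auto
  have "ln (sqrt w) \<le> sqrt w - 1" using s by (intro ln_le_minus_one) auto
  moreover have "ln w = 2 * ln (sqrt w)"
    using assms by (simp add: ln_sqrt)
  moreover have "2 * (sqrt w - 1) < w - 1"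
  proof -
    have "0 < (sqrt w - 1)^2" using s by simp
    then show ?thesis using assms by (simp add: power2_eq_square algebra_simps)
  qed
  ultimately have "ln w \<le> 2 * (sqrt w - 1)" by simp
  with \<open>2 * (sqrt w - 1) < w - 1\<close> show ?thesis by simp
qed

lemma phi_pos:
  fixes x y :: real assumes "0 < x" "0 < y" "x + y < 1"
  shows "0 < phi x y"
proof -
  have w1: "ln ((1 - y) / x) < (1 - y) / x - 1"
    using assms by (intro ln_strict) auto
  have w2: "ln (y / (1 - x)) \<le> y / (1 - x) - 1"
    using assms by (intro ln_le_minus_one) auto
  have "x * ln ((1 - y) / x) < x * ((1 - y) / x - 1)"
    using w1 assms by simp
  moreover have "(1 - x) * ln (y / (1 - x)) \<le> (1 - x) * (y / (1 - x) - 1)"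
    using w2 assms by (intro mult_left_mono) auto
  moreover have "x * ((1 - y) / x - 1) + (1 - x) * (y / (1 - x) - 1) = 0"
    using assms by (simp add: field_simps)
  moreover have "phi x y = - (x * ln ((1 - y) / x) + (1 - x) * ln (y / (1 - x)))"
    using assms by (simp add: phi_def ln_div algebra_simps)
  ultimately show ?thesis by linarith
qed

lemma xlnx: fixes x :: real assumes "0 < x" "x < 1" shows "-1 \<le> x * ln x"
proof -
  have "ln (1 / x) \<le> 1 / x - 1" using assms by (intro ln_le_minus_one) auto
  then have "- ln x \<le> 1 / x - 1" using assms by (simp add: ln_div)
  then have "x * (- ln x) \<le> x * (1 / x - 1)" using assms by (intro mult_left_mono) auto
  also have "x * (1 / x - 1) = 1 - x" using assms by (simp add: field_simps)
  finally show ?thesis using assms by simp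
qed

lemma phi_lower:
  fixes x y :: real assumes "0 < x" "x < 1" "0 < y" "y < 1"
  shows "(1 - x) * (- ln y) - 2 \<le> phi x y"
proof -
  have "phi x y = x * ln x - x * ln (1 - y) + (1 - x) * ln (1 - x) + (1 - x) * (- ln y)"
    using assms by (simp add: phi_def ln_div algebra_simps)
  moreover have "-1 \<le> x * ln x" using xlnx assms by auto
  moreover have "-1 \<le> (1 - x) * ln (1 - x)" using xlnx[of "1 - x"] assms by auto
  moreover have "x * ln (1 - y) \<le> 0" using assms by (intro mult_nonneg_nonpos) auto
  ultimately show ?thesis by linarith
qed

lemma asym:
  fixes \<epsilon> :: real assumes e: "0 < \<epsilon>"
  shows "\<exists>\<delta>>0. \<delta> \<le> 1/4 \<and> (\<forall>\<alpha> \<beta>. 0 < \<alpha> \<and> \<alpha> < \<delta> \<and> 0 < \<beta> \<and> \<beta> < \<delta> \<longrightarrow>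
     (1 - \<epsilon>) * \<bar>ln \<beta>\<bar> \<le> phi (\<alpha> + \<beta>) \<beta> \<and> (1 - \<epsilon>) * \<bar>ln \<alpha>\<bar> \<le> phi (\<alpha> + \<beta>) \<alpha>)"
proof -
  define \<delta> where "\<delta> = min (min (\<epsilon> / 4) (exp (- 4 / \<epsilon>))) (1/4)"
  have d: "0 < \<delta>" "\<delta> \<le> 1/4" "\<delta> \<le> \<epsilon> / 4" "\<delta> \<le> exp (- 4 / \<epsilon>)" using e by (auto simp: \<delta>_def)
  have key: "(1 - \<epsilon>) * \<bar>ln y\<bar> \<le> phi x y" if x: "0 < x" "x < 2 * \<delta>" and y: "0 < y" "y < \<delta>" for x y
  proof -
    have y1: "y < 1" using y d by simp
    have lny: "\<bar>ln y\<bar> = - ln y" using y y1 by simp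
    have "ln y < ln (exp (- 4 / \<epsilon>))" using y d by (subst ln_less_cancel_iff) auto
    then have big: "4 / \<epsilon> < - ln y" by simp
    have lnp: "0 \<le> - ln y" using big e by (smt (verit) divide_pos_pos)
    have "2 \<le> (\<epsilon> / 2) * (- ln y)"
    proof -
      have "(\<epsilon> / 2) * (4 / \<epsilon>) \<le> (\<epsilon> / 2) * (- ln y)" using big e by (intro mult_left_mono) auto
      then show ?thesis using e by simp
    qed
    moreover have "(\<epsilon> / 2) * (- ln y) \<le> (\<epsilon> - x) * (- ln y)"
      using x d lnp by (intro mult_right_mono) auto
    moreover have "(1 - x) * (- ln y) - 2 \<le> phi x y"
      using x y y1 d by (intro phi_lower) auto
    ultimately show ?thesis unfolding lny by (simp add: algebra_simps)
  qed
  show ?thesis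
  proof (intro exI[of _ \<delta>] conjI allI impI d(1,2))
    fix \<alpha> \<beta> assume ab: "0 < \<alpha> \<and> \<alpha> < \<delta> \<and> 0 < \<beta> \<and> \<beta> < \<delta>"
    show "(1 - \<epsilon>) * \<bar>ln \<beta>\<bar> \<le> phi (\<alpha> + \<beta>) \<beta>" using ab by (intro key) auto
    show "(1 - \<epsilon>) * \<bar>ln \<alpha>\<bar> \<le> phi (\<alpha> + \<beta>) \<alpha>" using ab by (intro key) auto
  qed
qed

lemma div_helper:
  assumes "I = \<infinity> \<or> (\<exists>r. I = ereal r \<and> 0 < r \<and> ph \<le> t * r)" "0 \<le> t" "c \<le> ph"
  shows "div_inf c I \<le> t"
  using assms
proof (cases "I = \<infinity>")
  case False
  then obtain r where r: "I = ereal r" "0 < r" "ph \<le> t * r" using assms by auto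
  have "c / r \<le> ph / r" using r assms by (simp add: divide_right_mono)
  also have "\<dots> \<le> t" using r by (simp add: divide_le_eq mult.commute)
  finally show ?thesis using r by (simp add: div_inf_def)
qed (simp add: div_inf_def)

lemma div_nonneg:
  assumes "I = \<infinity> \<or> (\<exists>r. I = ereal r \<and> 0 < r \<and> ph \<le> t * r)" "0 \<le> c"
  shows "0 \<le> div_inf c I"
  using assms by (auto simp: div_inf_def)



lemma klneg_le1:
  assumes pn: "\<And>x. x \<in> space \<nu> \<Longrightarrow> 0 \<le> p x" and qn: "\<And>x. x \<in> space \<nu> \<Longrightarrow> 0 \<le> q x"
    and qi: "(\<integral>\<^sup>+ x. ennreal (q x) \<partial>\<nu>) = 1"
  shows "(\<integral>\<^sup>+x. kl_neg p q x \<partial>\<nu>) \<le> 1"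
proof -
  have "(\<integral>\<^sup>+x. kl_neg p q x \<partial>\<nu>) \<le> (\<integral>\<^sup>+x. ennreal (q x) \<partial>\<nu>)"
  proof (rule nn_integral_mono)
    fix x assume x: "x \<in> space \<nu>"
    show "kl_neg p q x \<le> ennreal (q x)"
    proof (cases "0 < p x \<and> 0 < q x")
      case True
      have "ln (q x / p x) \<le> q x / p x - 1" using True by (intro ln_le_minus_one) auto
      then have "p x * ln (q x / p x) \<le> p x * (q x / p x - 1)"
        using True by (intro mult_left_mono) auto
      also have "\<dots> \<le> q x" using True by (simp add: field_simps)
      finally have "p x * ln (q x / p x) \<le> q x" .
      moreover have "- (p x * ln (p x / q x)) = p x * ln (q x / p x)"
        using True by (simp add: ln_div algebra_simps)
      ultimately have "- (p x * ln (p x / q x)) \<le> q x" by linarith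
      then show ?thesis using True by (auto simp: kl_neg_def intro: ennreal_leI)
    next
      case False
      then have "p x = 0 \<or> q x = 0" using pn[OF x] qn[OF x] by auto
      then show ?thesis by (auto simp: kl_neg_def)
    qed
  qed
  also have "\<dots> = 1" using qi by simp
  finally show ?thesis .
qed

locale mainctx =
  fixes \<nu> :: "'a measure" and f :: "'p \<Rightarrow> 'a \<Rightarrow> real"
    and \<Theta>0 \<Theta>1 :: "'p set" and K :: nat and \<theta> :: "nat \<Rightarrow> 'p"
  assumes sigma_finite: "sigma_finite_measure \<nu>"
    and f_meas: "\<And>t. t \<in> \<Theta>0 \<union> \<Theta>1 \<Longrightarrow> f t \<in> borel_measurable \<nu>"
    and f_nonneg: "\<And>t x. t \<in> \<Theta>0 \<union> \<Theta>1 \<Longrightarrow> x \<in> space \<nu> \<Longrightarrow> 0 \<le> f t x"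
    and f_density: "\<And>t. t \<in> \<Theta>0 \<union> \<Theta>1 \<Longrightarrow> (\<integral>\<^sup>+ x. ennreal (f t x) \<partial>\<nu>) = 1"
    and K: "K \<ge> 1"
    and \<theta>: "\<theta> \<in> joint_params K \<Theta>0 \<Theta>1"
begin

lemma jp_in: "\<theta>' \<in> joint_params K \<Theta>0 \<Theta>1 \<Longrightarrow> k \<in> {1..K} \<Longrightarrow> \<theta>' k \<in> \<Theta>0 \<union> \<Theta>1"
  by (auto simp: joint_params_def)

lemma dfam_of: assumes th: "\<theta>' \<in> joint_params K \<Theta>0 \<Theta>1" shows "dfam \<nu> K (\<lambda>k. f (\<theta>' k))"
  unfolding dfam_def
proof (intro conjI allI impI)
  show "sigma_finite_measure \<nu>" by (rule sigma_finite)
  show "1 \<le> K" using K by simp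
  show "\<And>k. k \<in> {1..K} \<Longrightarrow> f (\<theta>' k) \<in> borel_measurable \<nu>"
    by (rule f_meas[OF jp_in[OF th]])
  show "\<And>k x. k \<in> {1..K} \<Longrightarrow> x \<in> space \<nu> \<Longrightarrow> 0 \<le> f (\<theta>' k) x"
    by (rule f_nonneg[OF jp_in[OF th]])
  show "\<And>k. k \<in> {1..K} \<Longrightarrow> (\<integral>\<^sup>+ x. ennreal (f (\<theta>' k) x) \<partial>\<nu>) = 1"
    by (rule f_density[OF jp_in[OF th]])
qed

lemma Pth_eq: "\<theta>' \<in> joint_params K \<Theta>0 \<Theta>1 \<Longrightarrow> Pth \<nu> f K \<theta>' = PiM (all_idx K) (dfam.Mh \<nu> K (\<lambda>k. f (\<theta>' k)))"
  unfolding Pth_def using dfam.PP_eq[OF dfam_of] by simp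

lemma ps_Pth: "\<theta>' \<in> joint_params K \<Theta>0 \<Theta>1 \<Longrightarrow> prob_space (Pth \<nu> f K \<theta>')"
  unfolding Pth_eq by (rule prob_space_PiM) (rule dfam.prob_Mh[OF dfam_of])

lemma sets_Pth: "sets (Pth \<nu> f K \<theta>') = sets (Omega \<nu> K)"
  unfolding Pth_def Omega_def by (rule sets_PiM_cong) auto

lemma space_Pth: "space (Pth \<nu> f K \<theta>') = space (Omega \<nu> K)"
  unfolding Pth_def Omega_def by (simp add: space_PiM)

lemma mono_Pth:
  assumes "\<theta>' \<in> joint_params K \<Theta>0 \<Theta>1" "A \<subseteq> B" "B \<in> sets (Omega \<nu> K)"
  shows "measure (Pth \<nu> f K \<theta>') A \<le> measure (Pth \<nu> f K \<theta>') B"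
  by (rule finite_measure.finite_measure_mono[OF prob_space.finite_measure[OF ps_Pth[OF assms(1)]] assms(2)])
     (use assms(3) sets_Pth in auto)

lemma Delta_D: "(T, D) \<in> Delta \<nu> f K \<Theta>0 \<Theta>1 \<alpha> \<beta> \<Longrightarrow> is_test \<nu> K T D \<and>
     (\<forall>\<theta>\<in>joint_params K \<Theta>0 \<Theta>1.
        prob_space.prob (Pth \<nu> f K \<theta>) {\<omega>\<in>space (Pth \<nu> f K \<theta>). T \<omega> < \<infinity>} = 1 \<and>
        prob_space.prob (Pth \<nu> f K \<theta>) {\<omega>\<in>space (Pth \<nu> f K \<theta>). D \<omega> - signals K \<Theta>1 \<theta> \<noteq> {}} \<le> \<alpha> \<and>
        prob_space.prob (Pth \<nu> f K \<theta>) {\<omega>\<in>space (Pth \<nu> f K \<theta>). signals K \<Theta>1 \<theta> - D \<omega> \<noteq> {}} \<le> \<beta>)"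
  by (simp add: Delta_def)

lemma pair:
  fixes Pr :: "nat set \<Rightarrow> bool" and a b t :: real
  assumes \<theta>': "\<theta>' \<in> joint_params K \<Theta>0 \<Theta>1"
    and TD: "(T, D) \<in> Delta \<nu> f K \<Theta>0 \<Theta>1 \<alpha> \<beta>"
    and ET: "(\<integral>\<^sup>+\<omega>. ennreal_of_enat (T \<omega>) \<partial>Pth \<nu> f K \<theta>) = ennreal t" and t: "0 \<le> t"
    and a: "0 < a" and b: "0 < b" and ab: "a + b < 1/2"
    and PE: "measure (Pth \<nu> f K \<theta>) {\<omega>\<in>space (Omega \<nu> K). Pr (D \<omega>)} \<le> a"
    and QE: "measure (Pth \<nu> f K \<theta>') {\<omega>\<in>space (Omega \<nu> K). \<not> Pr (D \<omega>)} \<le> b"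
    and fin: "KL_joint \<nu> f K \<theta> \<theta>' \<noteq> \<infinity>"
  shows "\<exists>r. KL_joint \<nu> f K \<theta> \<theta>' = ereal r \<and> phi (a + b) b \<le> t * r"
proof -
  define p where "p = (\<lambda>k. f (\<theta> k))"
  define q where "q = (\<lambda>k. f (\<theta>' k))"
  interpret P: dfam \<nu> K p unfolding p_def by (rule dfam_of[OF \<theta>])
  interpret Q: dfam \<nu> K q unfolding q_def by (rule dfam_of[OF \<theta>'])
  have negf: "(\<integral>\<^sup>+x. kl_neg (p k) (q k) x \<partial>\<nu>) \<le> 1" if k: "k \<in> {1..K}" for k
    by (rule klneg_le1) (use P.g_nn Q.g_nn Q.g_int k in auto)
  have KLk: "KL \<nu> (p k) (q k) \<noteq> \<infinity>" if k: "k \<in> {1..K}" for k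
  proof
    assume inf: "KL \<nu> (p k) (q k) = \<infinity>"
    have "KL_joint \<nu> f K \<theta> \<theta>' = \<infinity>"
      unfolding KL_joint_def
      by (rule sum_Pinfty[THEN iffD2, OF conjI[OF finite_atLeastAtMost bexI[of _ k, OF _ k]]])
         (use inf in \<open>simp only: p_def q_def\<close>)
    then show False using fin by simp
  qed
  have posf: "(\<integral>\<^sup>+x. kl_pos (p k) (q k) x \<partial>\<nu>) < \<infinity>" if k: "k \<in> {1..K}" for k
  proof (rule ccontr)
    assume "\<not> ?thesis"
    then have "(\<integral>\<^sup>+x. kl_pos (p k) (q k) x \<partial>\<nu>) = \<infinity>" by (metis less_top infinity_ennreal_def)
    moreover have "(\<integral>\<^sup>+x. kl_neg (p k) (q k) x \<partial>\<nu>) \<noteq> \<infinity>"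
      using negf[OF k] by (auto simp: top_unique)
    ultimately have "KL \<nu> (p k) (q k) = \<infinity>"
      unfolding KL_def by (cases "(\<integral>\<^sup>+x. kl_neg (p k) (q k) x \<partial>\<nu>)") auto
    then show False using KLk[OF k] by simp
  qed
  have tw: "twofam \<nu> K p q"
    by (intro twofam.intro twofam_axioms.intro P.dfam_axioms Q.dfam_axioms posf)
  have PPe: "Pth \<nu> f K \<theta> = PiM (all_idx K) P.Mh" unfolding p_def by (rule Pth_eq[OF \<theta>])
  have QQe: "Pth \<nu> f K \<theta>' = PiM (all_idx K) Q.Mh" unfolding q_def by (rule Pth_eq[OF \<theta>'])
  have test: "is_test \<nu> K T D" using Delta_D[OF TD] by simp
  have "prob_space.prob (Pth \<nu> f K \<theta>) {\<omega>\<in>space (Pth \<nu> f K \<theta>). T \<omega> < \<infinity>} = 1"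
    using Delta_D[OF TD] \<theta> by blast
  then have "AE \<omega> in Pth \<nu> f K \<theta>. \<omega> \<in> {\<omega>\<in>space (Pth \<nu> f K \<theta>). T \<omega> < \<infinity>}"
    by (rule prob_space.AE_prob_1[OF ps_Pth[OF \<theta>]])
  then have Tfin: "AE \<omega> in PiM (all_idx K) P.Mh. T \<omega> \<noteq> \<infinity>"
    unfolding PPe by eventually_elim auto
  interpret tf: testfam \<nu> K p q T D
    by (intro testfam.intro testfam_axioms.intro tw test Tfin)
  have c: "phi (a + b) b \<le> t * (\<Sum>k\<in>{1..K}. enn2real (\<integral>\<^sup>+x. kl_pos (p k) (q k) x \<partial>\<nu>) - enn2real (\<integral>\<^sup>+x. kl_neg (p k) (q k) x \<partial>\<nu>))"
  proof (rule tf.core)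
    show "(\<integral>\<^sup>+\<omega>. ennreal_of_enat (T \<omega>) \<partial>PiM (all_idx K) P.Mh) = ennreal t" using ET unfolding PPe .
    show "measure (PiM (all_idx K) P.Mh) {\<omega>\<in>space (PiM (all_idx K) P.Mh). Pr (D \<omega>)} \<le> a"
      using PE unfolding PPe tf.space_PP .
    show "measure (PiM (all_idx K) Q.Mh) {\<omega>\<in>space (PiM (all_idx K) P.Mh). \<not> Pr (D \<omega>)} \<le> b"
      using QE unfolding QQe tf.space_PP .
  qed (use t a b ab in auto)
  have "KL_joint \<nu> f K \<theta> \<theta>' = (\<Sum>k\<in>{1..K}. ereal (enn2real (\<integral>\<^sup>+x. kl_pos (p k) (q k) x \<partial>\<nu>) - enn2real (\<integral>\<^sup>+x. kl_neg (p k) (q k) x \<partial>\<nu>)))"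
    unfolding KL_joint_def
  proof (rule sum.cong[OF refl])
    fix k assume k: "k \<in> {1..K}"
    have nf: "(\<integral>\<^sup>+x. kl_neg (p k) (q k) x \<partial>\<nu>) < \<infinity>"
      using negf[OF k] order.strict_trans1 ennreal_one_less_top by (metis infinity_ennreal_def)
    have e1: "enn2ereal (\<integral>\<^sup>+x. kl_pos (p k) (q k) x \<partial>\<nu>) = ereal (enn2real (\<integral>\<^sup>+x. kl_pos (p k) (q k) x \<partial>\<nu>))"
      using posf[OF k] by (cases "(\<integral>\<^sup>+x. kl_pos (p k) (q k) x \<partial>\<nu>)" rule: ennreal_cases) auto
    have e2: "enn2ereal (\<integral>\<^sup>+x. kl_neg (p k) (q k) x \<partial>\<nu>) = ereal (enn2real (\<integral>\<^sup>+x. kl_neg (p k) (q k) x \<partial>\<nu>))"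
      using nf by (cases "(\<integral>\<^sup>+x. kl_neg (p k) (q k) x \<partial>\<nu>)" rule: ennreal_cases) auto
    show "KL \<nu> (f (\<theta> k)) (f (\<theta>' k)) = ereal (enn2real (\<integral>\<^sup>+x. kl_pos (p k) (q k) x \<partial>\<nu>) - enn2real (\<integral>\<^sup>+x. kl_neg (p k) (q k) x \<partial>\<nu>))"
      unfolding KL_def p_def[symmetric] q_def[symmetric] using e1 e2 by (simp add: p_def q_def)
  qed
  also have "\<dots> = ereal (\<Sum>k\<in>{1..K}. enn2real (\<integral>\<^sup>+x. kl_pos (p k) (q k) x \<partial>\<nu>) - enn2real (\<integral>\<^sup>+x. kl_neg (p k) (q k) x \<partial>\<nu>))"
    by (simp add: sum_ereal)
  finally show ?thesis using c by blast
qed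

end


lemma inf_helper:
  fixes S :: "ereal set" and ph t :: real
  assumes S: "\<forall>s\<in>S. s = \<infinity> \<or> (\<exists>r. s = ereal r \<and> ph \<le> t * r)" and ph: "0 < ph" and t: "0 \<le> t"
  shows "Inf S = \<infinity> \<or> (\<exists>r. Inf S = ereal r \<and> 0 < r \<and> ph \<le> t * r)"
proof (cases "\<forall>s\<in>S. s = \<infinity>")
  case True
  then have "S \<subseteq> {\<infinity>}" by auto
  then have "S = {} \<or> S = {\<infinity>}" by (metis subset_singletonD)
  then have "Inf S = \<infinity>" by (simp only: Inf_eq_PInfty)
  then show ?thesis by simp
next
  case False
  then obtain s0 where s0': "s0 \<in> S" "s0 \<noteq> \<infinity>" by blast
  then have "\<exists>r. s0 = ereal r \<and> ph \<le> t * r" using S by blast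
  then obtain r0 where r0: "s0 = ereal r0" "ph \<le> t * r0" by blast
  note s0 = s0'(1) r0
  have tp: "0 < t"
  proof (rule ccontr)
    assume "\<not> 0 < t" then have "t = 0" using t by simp
    then show False using s0(3) ph by simp
  qed
  have lb: "ereal (ph / t) \<le> Inf S"
  proof (rule Inf_greatest)
    fix s assume "s \<in> S"
    then have "s = \<infinity> \<or> (\<exists>r. s = ereal r \<and> ph \<le> t * r)" using S by blast
    then show "ereal (ph / t) \<le> s"
    proof
      assume "s = \<infinity>" then show ?thesis by simp
    next
      assume "\<exists>r. s = ereal r \<and> ph \<le> t * r"
      then obtain r where r: "s = ereal r" "ph \<le> t * r" by blast
      have "ph / t \<le> r" unfolding pos_divide_le_eq[OF tp] using r(2) by (simp add: mult.commute[of r t])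
      then show ?thesis using r(1) by simp
    qed
  qed
  have ub: "Inf S \<le> ereal r0" using Inf_lower[OF s0(1)] unfolding s0(2) .
  show ?thesis
  proof (cases "Inf S")
    case (real r)
    then have "ph / t \<le> r" using lb by simp
    then have "ph \<le> t * r" unfolding pos_divide_le_eq[OF tp] by (simp add: mult.commute[of r t])
    moreover have "0 < ph / t" using ph tp by simp
    then have "0 < r" using \<open>ph / t \<le> r\<close> by linarith
    ultimately show ?thesis using real by blast
  next
    case PInf then show ?thesis using ub by simp
  next
    case MInf then show ?thesis using lb by simp
  qed
qed

context mainctx begin

lemma ET_cases:
  obtains "(\<integral>\<^sup>+\<omega>. ennreal_of_enat (T \<omega>) \<partial>Pth \<nu> f K \<theta>) = \<top>"
  | t where "(\<integral>\<^sup>+\<omega>. ennreal_of_enat (T \<omega>) \<partial>Pth \<nu> f K \<theta>) = ennreal t" "0 \<le> t"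
  by (cases "(\<integral>\<^sup>+\<omega>. ennreal_of_enat (T \<omega>) \<partial>Pth \<nu> f K \<theta>)" rule: ennreal_cases) auto

lemma Ibound0:
  assumes TD: "(T, D) \<in> Delta \<nu> f K \<Theta>0 \<Theta>1 \<alpha> \<beta>"
    and ET: "(\<integral>\<^sup>+\<omega>. ennreal_of_enat (T \<omega>) \<partial>Pth \<nu> f K \<theta>) = ennreal t" and t: "0 \<le> t"
    and a: "0 < \<alpha>" and b: "0 < \<beta>" and ab: "\<alpha> + \<beta> < 1/2"
  shows "I0 \<nu> f K \<Theta>0 \<Theta>1 \<theta> = \<infinity> \<or> (\<exists>r. I0 \<nu> f K \<Theta>0 \<Theta>1 \<theta> = ereal r \<and> 0 < r \<and> phi (\<alpha> + \<beta>) \<beta> \<le> t * r)"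
  unfolding I0_def
proof (rule inf_helper[OF _ phi_pos t])
  have test: "is_test \<nu> K T D" using Delta_D[OF TD] by simp
  show "\<forall>s\<in>{KL_joint \<nu> f K \<theta> \<theta>' |\<theta>'. \<theta>' \<in> joint_params K \<Theta>0 \<Theta>1 \<and> signals K \<Theta>1 \<theta>' - signals K \<Theta>1 \<theta> \<noteq> {}}.
      s = \<infinity> \<or> (\<exists>r. s = ereal r \<and> phi (\<alpha> + \<beta>) \<beta> \<le> t * r)"
  proof (intro ballI)
    fix s assume "s \<in> {KL_joint \<nu> f K \<theta> \<theta>' |\<theta>'. \<theta>' \<in> joint_params K \<Theta>0 \<Theta>1 \<and> signals K \<Theta>1 \<theta>' - signals K \<Theta>1 \<theta> \<noteq> {}}"
    then obtain \<theta>' k where \<theta>': "\<theta>' \<in> joint_params K \<Theta>0 \<Theta>1" and k1: "k \<in> signals K \<Theta>1 \<theta>'" and k2: "k \<notin> signals K \<Theta>1 \<theta>"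
      and s: "s = KL_joint \<nu> f K \<theta> \<theta>'" by blast
    have kK: "k \<in> {1..K}" using k1 by (auto simp: signals_def)
    have err: "prob_space.prob (Pth \<nu> f K \<theta>'') {\<omega>\<in>space (Pth \<nu> f K \<theta>''). D \<omega> - signals K \<Theta>1 \<theta>'' \<noteq> {}} \<le> \<alpha>
       \<and> prob_space.prob (Pth \<nu> f K \<theta>'') {\<omega>\<in>space (Pth \<nu> f K \<theta>''). signals K \<Theta>1 \<theta>'' - D \<omega> \<noteq> {}} \<le> \<beta>"
      if "\<theta>'' \<in> joint_params K \<Theta>0 \<Theta>1" for \<theta>''
      using Delta_D[OF TD] that by blast
    have PE: "measure (Pth \<nu> f K \<theta>) {\<omega>\<in>space (Omega \<nu> K). k \<in> D \<omega>} \<le> \<alpha>"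
    proof -
      have "measure (Pth \<nu> f K \<theta>) {\<omega>\<in>space (Omega \<nu> K). k \<in> D \<omega>}
          \<le> measure (Pth \<nu> f K \<theta>) {\<omega>\<in>space (Omega \<nu> K). D \<omega> - signals K \<Theta>1 \<theta> \<noteq> {}}"
        by (rule mono_Pth[OF \<theta> _ test_D_meas[OF test]]) (use k2 in auto)
      then show ?thesis using err[OF \<theta>] by (simp add: space_Pth)
    qed
    have QE: "measure (Pth \<nu> f K \<theta>') {\<omega>\<in>space (Omega \<nu> K). \<not> k \<in> D \<omega>} \<le> \<beta>"
    proof -
      have "measure (Pth \<nu> f K \<theta>') {\<omega>\<in>space (Omega \<nu> K). \<not> k \<in> D \<omega>}
          \<le> measure (Pth \<nu> f K \<theta>') {\<omega>\<in>space (Omega \<nu> K). signals K \<Theta>1 \<theta>' - D \<omega> \<noteq> {}}"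
        by (rule mono_Pth[OF \<theta>' _ test_D_meas[OF test]]) (use k1 in auto)
      then show ?thesis using err[OF \<theta>'] by (simp add: space_Pth)
    qed
    have "KL_joint \<nu> f K \<theta> \<theta>' \<noteq> \<infinity> \<Longrightarrow> \<exists>r. KL_joint \<nu> f K \<theta> \<theta>' = ereal r \<and> phi (\<alpha> + \<beta>) \<beta> \<le> t * r"
      by (rule pair[OF \<theta>' TD ET t a b ab PE QE])
    then show "s = \<infinity> \<or> (\<exists>r. s = ereal r \<and> phi (\<alpha> + \<beta>) \<beta> \<le> t * r)" unfolding s by blast
  qed
qed (use a b ab in auto)

lemma Ibound1:
  assumes TD: "(T, D) \<in> Delta \<nu> f K \<Theta>0 \<Theta>1 \<alpha> \<beta>"
    and ET: "(\<integral>\<^sup>+\<omega>. ennreal_of_enat (T \<omega>) \<partial>Pth \<nu> f K \<theta>) = ennreal t" and t: "0 \<le> t"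
    and a: "0 < \<alpha>" and b: "0 < \<beta>" and ab: "\<alpha> + \<beta> < 1/2"
  shows "I1 \<nu> f K \<Theta>0 \<Theta>1 \<theta> = \<infinity> \<or> (\<exists>r. I1 \<nu> f K \<Theta>0 \<Theta>1 \<theta> = ereal r \<and> 0 < r \<and> phi (\<alpha> + \<beta>) \<alpha> \<le> t * r)"
  unfolding I1_def
proof (rule inf_helper[OF _ phi_pos t])
  have test: "is_test \<nu> K T D" using Delta_D[OF TD] by simp
  show "\<forall>s\<in>{KL_joint \<nu> f K \<theta> \<theta>' |\<theta>'. \<theta>' \<in> joint_params K \<Theta>0 \<Theta>1 \<and> signals K \<Theta>1 \<theta> - signals K \<Theta>1 \<theta>' \<noteq> {}}.
      s = \<infinity> \<or> (\<exists>r. s = ereal r \<and> phi (\<alpha> + \<beta>) \<alpha> \<le> t * r)"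
  proof (intro ballI)
    fix s assume "s \<in> {KL_joint \<nu> f K \<theta> \<theta>' |\<theta>'. \<theta>' \<in> joint_params K \<Theta>0 \<Theta>1 \<and> signals K \<Theta>1 \<theta> - signals K \<Theta>1 \<theta>' \<noteq> {}}"
    then obtain \<theta>' k where \<theta>': "\<theta>' \<in> joint_params K \<Theta>0 \<Theta>1" and k1: "k \<in> signals K \<Theta>1 \<theta>" and k2: "k \<notin> signals K \<Theta>1 \<theta>'"
      and s: "s = KL_joint \<nu> f K \<theta> \<theta>'" by blast
    have err: "prob_space.prob (Pth \<nu> f K \<theta>'') {\<omega>\<in>space (Pth \<nu> f K \<theta>''). D \<omega> - signals K \<Theta>1 \<theta>'' \<noteq> {}} \<le> \<alpha>
       \<and> prob_space.prob (Pth \<nu> f K \<theta>'') {\<omega>\<in>space (Pth \<nu> f K \<theta>''). signals K \<Theta>1 \<theta>'' - D \<omega> \<noteq> {}} \<le> \<beta>"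
      if "\<theta>'' \<in> joint_params K \<Theta>0 \<Theta>1" for \<theta>''
      using Delta_D[OF TD] that by blast
    have PE: "measure (Pth \<nu> f K \<theta>) {\<omega>\<in>space (Omega \<nu> K). k \<notin> D \<omega>} \<le> \<beta>"
    proof -
      have "measure (Pth \<nu> f K \<theta>) {\<omega>\<in>space (Omega \<nu> K). k \<notin> D \<omega>}
          \<le> measure (Pth \<nu> f K \<theta>) {\<omega>\<in>space (Omega \<nu> K). signals K \<Theta>1 \<theta> - D \<omega> \<noteq> {}}"
        by (rule mono_Pth[OF \<theta> _ test_D_meas[OF test]]) (use k1 in auto)
      then show ?thesis using err[OF \<theta>] by (simp add: space_Pth)
    qed
    have QE: "measure (Pth \<nu> f K \<theta>') {\<omega>\<in>space (Omega \<nu> K). \<not> k \<notin> D \<omega>} \<le> \<alpha>"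
    proof -
      have "measure (Pth \<nu> f K \<theta>') {\<omega>\<in>space (Omega \<nu> K). \<not> k \<notin> D \<omega>}
          \<le> measure (Pth \<nu> f K \<theta>') {\<omega>\<in>space (Omega \<nu> K). D \<omega> - signals K \<Theta>1 \<theta>' \<noteq> {}}"
        by (rule mono_Pth[OF \<theta>' _ test_D_meas[OF test]]) (use k2 in auto)
      then show ?thesis using err[OF \<theta>'] by (simp add: space_Pth)
    qed
    have "KL_joint \<nu> f K \<theta> \<theta>' \<noteq> \<infinity> \<Longrightarrow> \<exists>r. KL_joint \<nu> f K \<theta> \<theta>' = ereal r \<and> phi (\<beta> + \<alpha>) \<alpha> \<le> t * r"
      by (rule pair[OF \<theta>' TD ET t b a _ PE QE]) (use ab in simp)
    moreover have "phi (\<beta> + \<alpha>) \<alpha> = phi (\<alpha> + \<beta>) \<alpha>" by (simp add: add.commute)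
    ultimately show "s = \<infinity> \<or> (\<exists>r. s = ereal r \<and> phi (\<alpha> + \<beta>) \<alpha> \<le> t * r)" unfolding s by auto
  qed
qed (use a b ab in auto)

lemma bound_test:
  assumes TD: "(T, D) \<in> Delta \<nu> f K \<Theta>0 \<Theta>1 \<alpha> \<beta>"
    and a: "0 < \<alpha>" and b: "0 < \<beta>" and ab: "\<alpha> + \<beta> < 1/2"
    and c0: "0 \<le> c0" "\<gamma> * c0 \<le> phi (\<alpha> + \<beta>) \<beta>" and c1: "0 \<le> c1" "\<gamma> * c1 \<le> phi (\<alpha> + \<beta>) \<alpha>"
  shows "ennreal (\<gamma> * max (div_inf c0 (I0 \<nu> f K \<Theta>0 \<Theta>1 \<theta>)) (div_inf c1 (I1 \<nu> f K \<Theta>0 \<Theta>1 \<theta>)))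
     \<le> (\<integral>\<^sup>+\<omega>. ennreal_of_enat (T \<omega>) \<partial>Pth \<nu> f K \<theta>)"
proof (cases rule: ET_cases[of T])
  case 1 then show ?thesis by simp
next
  case (2 t)
  note I0 = Ibound0[OF TD 2 a b ab]
  note I1 = Ibound1[OF TD 2 a b ab]
  have d0: "0 \<le> div_inf c0 (I0 \<nu> f K \<Theta>0 \<Theta>1 \<theta>)" by (rule div_nonneg[OF I0 c0(1)])
  have d1: "0 \<le> div_inf c1 (I1 \<nu> f K \<Theta>0 \<Theta>1 \<theta>)" by (rule div_nonneg[OF I1 c1(1)])
  have g: "\<gamma> * div_inf c I = div_inf (\<gamma> * c) I" for c I by (simp add: div_inf_def)
  have "\<gamma> * max (div_inf c0 (I0 \<nu> f K \<Theta>0 \<Theta>1 \<theta>)) (div_inf c1 (I1 \<nu> f K \<Theta>0 \<Theta>1 \<theta>)) \<le> t"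
  proof (cases "0 \<le> \<gamma>")
    case True
    have "\<gamma> * div_inf c0 (I0 \<nu> f K \<Theta>0 \<Theta>1 \<theta>) \<le> t"
      unfolding g by (rule div_helper[OF I0 2(2) c0(2)])
    moreover have "\<gamma> * div_inf c1 (I1 \<nu> f K \<Theta>0 \<Theta>1 \<theta>) \<le> t"
      unfolding g by (rule div_helper[OF I1 2(2) c1(2)])
    ultimately show ?thesis by (simp add: max_def)
  next
    case False
    then have "\<gamma> * max (div_inf c0 (I0 \<nu> f K \<Theta>0 \<Theta>1 \<theta>)) (div_inf c1 (I1 \<nu> f K \<Theta>0 \<Theta>1 \<theta>)) \<le> 0"
      using d0 d1 by (intro mult_nonpos_nonneg) auto
    then show ?thesis using 2(2) by linarith
  qed
  then show ?thesis unfolding 2(1) by (rule ennreal_leI)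
qed

lemma bound_L:
  assumes a: "0 < \<alpha>" and b: "0 < \<beta>" and ab: "\<alpha> + \<beta> < 1/2"
    and c0: "0 \<le> c0" "\<gamma> * c0 \<le> phi (\<alpha> + \<beta>) \<beta>" and c1: "0 \<le> c1" "\<gamma> * c1 \<le> phi (\<alpha> + \<beta>) \<alpha>"
  shows "ennreal (\<gamma> * max (div_inf c0 (I0 \<nu> f K \<Theta>0 \<Theta>1 \<theta>)) (div_inf c1 (I1 \<nu> f K \<Theta>0 \<Theta>1 \<theta>)))
     \<le> Lopt \<nu> f K \<Theta>0 \<Theta>1 \<theta> \<alpha> \<beta>"
  unfolding Lopt_def
proof (rule INF_greatest)
  fix TD assume TD: "TD \<in> Delta \<nu> f K \<Theta>0 \<Theta>1 \<alpha> \<beta>"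
  obtain T D where "TD = (T, D)" by (cases TD)
  then show "ennreal (\<gamma> * max (div_inf c0 (I0 \<nu> f K \<Theta>0 \<Theta>1 \<theta>)) (div_inf c1 (I1 \<nu> f K \<Theta>0 \<Theta>1 \<theta>)))
     \<le> (\<integral>\<^sup>+\<omega>. ennreal_of_enat (fst TD \<omega>) \<partial>Pth \<nu> f K \<theta>)"
    using bound_test[of T D, OF _ a b ab c0 c1] TD by simp
qed

end

theorem theorem1:
  fixes \<nu> :: "'a measure" and f :: "'p \<Rightarrow> 'a \<Rightarrow> real"
    and \<Theta>0 \<Theta>1 :: "'p set" and K :: nat and \<theta> :: "nat \<Rightarrow> 'p"
  assumes sigma_finite: "sigma_finite_measure \<nu>"
    and f_meas: "\<And>t. t \<in> \<Theta>0 \<union> \<Theta>1 \<Longrightarrow> f t \<in> borel_measurable \<nu>"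
    and f_nonneg: "\<And>t x. t \<in> \<Theta>0 \<union> \<Theta>1 \<Longrightarrow> x \<in> space \<nu> \<Longrightarrow> 0 \<le> f t x"
    and f_density: "\<And>t. t \<in> \<Theta>0 \<union> \<Theta>1 \<Longrightarrow> (\<integral>\<^sup>+ x. ennreal (f t x) \<partial>\<nu>) = 1"
    and ne0: "\<Theta>0 \<noteq> {}" and ne1: "\<Theta>1 \<noteq> {}" and disj: "\<Theta>0 \<inter> \<Theta>1 = {}"
    and sep0: "\<And>t. t \<in> \<Theta>0 \<Longrightarrow> KL_set \<nu> f t \<Theta>1 > 0"
    and sep1: "\<And>t. t \<in> \<Theta>1 \<Longrightarrow> KL_set \<nu> f t \<Theta>0 > 0"
    and K: "K \<ge> 1"
    and \<theta>: "\<theta> \<in> joint_params K \<Theta>0 \<Theta>1"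
  shows "(\<forall>\<alpha> \<beta>. 0 < \<alpha> \<and> \<alpha> < 1 \<and> 0 < \<beta> \<and> \<beta> < 1 \<and> \<alpha> + \<beta> < 1/2 \<longrightarrow>
            ennreal (max (div_inf (phi (\<alpha> + \<beta>) \<beta>) (I0 \<nu> f K \<Theta>0 \<Theta>1 \<theta>))
                         (div_inf (phi (\<alpha> + \<beta>) \<alpha>) (I1 \<nu> f K \<Theta>0 \<Theta>1 \<theta>)))
              \<le> Lopt \<nu> f K \<Theta>0 \<Theta>1 \<theta> \<alpha> \<beta>)
       \<and> (\<forall>\<epsilon>>0. \<exists>\<delta>>0. \<forall>\<alpha> \<beta>. 0 < \<alpha> \<and> \<alpha> < \<delta> \<and> 0 < \<beta> \<and> \<beta> < \<delta> \<longrightarrow>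
            ennreal ((1 - \<epsilon>) * max (div_inf \<bar>ln \<beta>\<bar> (I0 \<nu> f K \<Theta>0 \<Theta>1 \<theta>))
                                    (div_inf \<bar>ln \<alpha>\<bar> (I1 \<nu> f K \<Theta>0 \<Theta>1 \<theta>)))
              \<le> Lopt \<nu> f K \<Theta>0 \<Theta>1 \<theta> \<alpha> \<beta>)"
proof -
  interpret mainctx \<nu> f \<Theta>0 \<Theta>1 K \<theta>
    by (rule mainctx.intro[OF sigma_finite f_meas f_nonneg f_density K \<theta>])
  show ?thesis
  proof (intro conjI allI impI)
    fix \<alpha> \<beta> :: real assume h: "0 < \<alpha> \<and> \<alpha> < 1 \<and> 0 < \<beta> \<and> \<beta> < 1 \<and> \<alpha> + \<beta> < 1/2"
    have p0: "0 \<le> phi (\<alpha> + \<beta>) \<beta>" using phi_pos[of "\<alpha> + \<beta>" \<beta>] h by simp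
    have p1: "0 \<le> phi (\<alpha> + \<beta>) \<alpha>" using phi_pos[of "\<alpha> + \<beta>" \<alpha>] h by simp
    show "ennreal (max (div_inf (phi (\<alpha> + \<beta>) \<beta>) (I0 \<nu> f K \<Theta>0 \<Theta>1 \<theta>))
                         (div_inf (phi (\<alpha> + \<beta>) \<alpha>) (I1 \<nu> f K \<Theta>0 \<Theta>1 \<theta>)))
              \<le> Lopt \<nu> f K \<Theta>0 \<Theta>1 \<theta> \<alpha> \<beta>"
      using bound_L[of \<alpha> \<beta> "phi (\<alpha> + \<beta>) \<beta>" 1 "phi (\<alpha> + \<beta>) \<alpha>"] h p0 p1 by simp
  next
    fix \<epsilon> :: real assume e: "0 < \<epsilon>"
    obtain \<delta> where d: "0 < \<delta>" "\<delta> \<le> 1/4" and dd: "\<forall>\<alpha> \<beta>. 0 < \<alpha> \<and> \<alpha> < \<delta> \<and> 0 < \<beta> \<and> \<beta> < \<delta> \<longrightarrow>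
     (1 - \<epsilon>) * \<bar>ln \<beta>\<bar> \<le> phi (\<alpha> + \<beta>) \<beta> \<and> (1 - \<epsilon>) * \<bar>ln \<alpha>\<bar> \<le> phi (\<alpha> + \<beta>) \<alpha>"
      using asym[OF e] by blast
    show "\<exists>\<delta>>0. \<forall>\<alpha> \<beta>. 0 < \<alpha> \<and> \<alpha> < \<delta> \<and> 0 < \<beta> \<and> \<beta> < \<delta> \<longrightarrow>
            ennreal ((1 - \<epsilon>) * max (div_inf \<bar>ln \<beta>\<bar> (I0 \<nu> f K \<Theta>0 \<Theta>1 \<theta>))
                                    (div_inf \<bar>ln \<alpha>\<bar> (I1 \<nu> f K \<Theta>0 \<Theta>1 \<theta>)))
              \<le> Lopt \<nu> f K \<Theta>0 \<Theta>1 \<theta> \<alpha> \<beta>"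
    proof (intro exI[of _ \<delta>] conjI allI impI d(1))
      fix \<alpha> \<beta> :: real assume h: "0 < \<alpha> \<and> \<alpha> < \<delta> \<and> 0 < \<beta> \<and> \<beta> < \<delta>"
      have ab: "\<alpha> + \<beta> < 1/2" using h d by simp
      show "ennreal ((1 - \<epsilon>) * max (div_inf \<bar>ln \<beta>\<bar> (I0 \<nu> f K \<Theta>0 \<Theta>1 \<theta>))
                                    (div_inf \<bar>ln \<alpha>\<bar> (I1 \<nu> f K \<Theta>0 \<Theta>1 \<theta>)))
              \<le> Lopt \<nu> f K \<Theta>0 \<Theta>1 \<theta> \<alpha> \<beta>"
      proof (rule bound_L)
        have hh: "(1 - \<epsilon>) * \<bar>ln \<beta>\<bar> \<le> phi (\<alpha> + \<beta>) \<beta> \<and> (1 - \<epsilon>) * \<bar>ln \<alpha>\<bar> \<le> phi (\<alpha> + \<beta>) \<alpha>"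
          using dd h by blast
        show "(1 - \<epsilon>) * \<bar>ln \<beta>\<bar> \<le> phi (\<alpha> + \<beta>) \<beta>" using hh by blast
        show "(1 - \<epsilon>) * \<bar>ln \<alpha>\<bar> \<le> phi (\<alpha> + \<beta>) \<alpha>" using hh by blast
      qed (use h ab in simp_all)
    qed
  qed
qed


end
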